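(* Suppose Assumptions 1–5 hold. Then: (i) $\lVert T^{1/2}\boldsymbol\theta(\alpha,\hat\beta_{T\alpha},\hat\pi_{T\alpha},\hat\varpi_{T\alpha})\rVert=O_{p\alpha}(1)$; (ii) $R_T(\alpha,\hat\beta_{T\alpha},\hat\pi_{T\alpha},\hat\varpi_{T\alpha})=o_{p\alpha}(1)$; (iii) $$L^\pi_T(\alpha,\hat\beta_{T\alpha},\hat\pi_{T\alpha},\hat\varpi_{T\alpha})-L^\pi_T(\alpha,\beta^*,\pi^*,0)=\tfrac12 Z_{T\alpha}'\mathcal I_\alpha Z_{T\alpha}-\tfrac12\big[T^{1/2}\hat{\boldsymbol\theta}_{T\alpha}-Z_{T\alpha}\big]'\mathcal I_\alpha\big[T^{1/2}\hat{\boldsymbol\theta}_{T\alpha}-Z_{T\alpha}\big]+o_{p\alpha}(1),$$ where $\hat{\boldsymbol\theta}_{T\alpha}=\boldsymbol\theta(\alpha,\hat\beta_{T\alpha},\hat\pi_{T\alpha},\hat\varpi_{T\alpha})$.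
   Context: Setting. Fix an integer $p\ge1$. $\{y_t\}$ is a real-valued time series observed for $t=-p+1,\dots,T$; write $\boldsymbol y_{t-1}=(y_{t-1},\dots,y_{t-p})$ and $\mathcal F_t=\sigma(y_s,\ s\le t)$. For $\tilde\phi=(\tilde\phi_0,\tilde\phi_1,\dots,\tilde\phi_p,\tilde\sigma^2)\in\mathbb R^{p+1}\times(0,\infty)$ let $f_t(\tilde\phi)=\tilde\sigma^{-1}\mathfrak N\big((y_t-\tilde\phi_0-\sum_{i=1}^p\tilde\phi_iy_{t-i})/\tilde\sigma\big)$ with $\mathfrak N(u)=(2\pi)^{-1/2}e^{-u^2/2}$; $\nabla f_t$ denotes the gradient with respect to $\tilde\phi$. Integers $q_1\ge0$, $q_2\ge1$ with $q_1+q_2=p+2$ and a known $(p+2)\times(p+2)$ permutation matrix $P$ are fixed; for $\beta\in\mathbb R^{q_1},\phi\in\mathbb R^{q_2}$ write $f_t(\beta,\phi)=f_t(P^{-1}(\beta,\phi))$. Given a mixing weight $\alpha_t(\alpha,\beta,\phi,\varphi)$ depending on an additional parameter $\alpha$, the two-regime mixture autoregressive log-likelihood is $L_T(\alpha,\beta,\phi,\varphi)=\sum_{t=1}^T\log[\alpha_tf_t(\beta,\phi)+(1-\alpha_t)f_t(\beta,\varphi)]$; the null (linear AR) log-likelihood is $L^0_T(\tilde\phi)=\sum_{t=1}^T\log f_t(\tilde\phi)$. Let $\hat{\tilde\phi}_T$ satisfy $L^0_T(\hat{\tilde\phi}_T)=\sup_{\tilde\phi\in\tilde\Phi}L^0_T(\tilde\phi)+o_p(1)$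 and $\hat{\tilde\phi}_T=\tilde\phi^*+o_p(1)$. Define $LR_T(\alpha)=2[\sup_{(\beta,\phi,\varphi)\in B\times\Phi\times\Phi}L_T(\alpha,\beta,\phi,\varphi)-\sup_{\tilde\phi\in\tilde\Phi}L^0_T(\tilde\phi)]$ and $LR_T=\sup_{\alpha\in A}LR_T(\alpha)$. Notation. For random quantities $X_{T\alpha}$ indexed by $\alpha\in A$, $X_{T\alpha}=o_{p\alpha}(1)$ (resp. $O_{p\alpha}(1)$) means $\sup_{\alpha\in A}\|X_{T\alpha}\|=o_p(1)$ (resp. $O_p(1)$). $\mathcal B(A,\mathbb R^k)$ (resp. $\mathcal C(A,\mathbb R^k)$) is the space of bounded (resp. continuous) $\mathbb R^k$-valued functions on $A$ with the uniform metric; $\Rightarrow$ denotes weak convergence of processes in such spaces. A set $\Lambda\subset\mathbb R^r$ is a cone if $\lambda\in\Lambda$ implies $a\lambda\in\Lambda$ for all real $a>0$. A collection $\{\Gamma_\alpha,\alpha\in A\}$ of subsets of $\mathbb R^r$ is locally uniformly equal to $\Lambda\subset\mathbb R^r$ if there is $\delta>0$ with $\Gamma_\alpha\cap(-\delta,\delta)^r=\Lambda\cap(-\delta,\delta)^r$ for all $\alpha\in A$. $\lambda_{\min},\lambda_{\max}$ denote smallest/largest eigenvalues. Assumption 1. (i) $y_t=\tilde\phi^*_0+\sum_{i=1}^p\tilde\phi^*_iy_{t-i}+\tilde\sigma^*\varepsilon_t$ is a stationary linear Gaussian AR($p$) process, $\varepsilon_t$ i.i.d. $N(0,1)$ with $\varepsilon_t$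 independent of $\{y_{t-j},j>0\}$, where $\tilde\phi^*$ is an interior point of a compact set $\tilde\Phi\subset\{\tilde\phi:\tilde\phi_0\in\mathbb R,\ 1-\sum_{i=1}^p\tilde\phi_iz^i\ne0\text{ for }|z|\le1,\ \tilde\sigma^2\in(0,\infty)\}$. (ii) The parameter space of $(\alpha,\beta,\phi,\varphi)$ is $A\times B\times\Phi\times\Phi$ with $A\subset\mathbb R^a$ compact and $B\subset\mathbb R^{q_1}$, $\Phi\subset\mathbb R^{q_2}$ compact such that $(\beta,\phi)\in B\times\Phi$ iff $P^{-1}(\beta,\phi)\in\tilde\Phi$; write $(\beta^*,\phi^* )=P\tilde\phi^*$. (iii) For all $t$ and all parameter values, $\alpha_t(\alpha,\beta,\phi,\varphi)$ is $\sigma(\boldsymbol y_{t-1})$-measurable and lies in $(0,1)$. Assumption 2. For each $\alpha\in A$, estimators $(\hat\beta_{T\alpha},\hat\phi_{T\alpha},\hat\varphi_{T\alpha})\in B\times\Phi\times\Phi$ satisfy (i) $L_T(\alpha,\hat\beta_{T\alpha},\hat\phi_{T\alpha},\hat\varphi_{T\alpha})=\sup_{(\beta,\phi,\varphi)\in B\times\Phi\times\Phi}L_T(\alpha,\beta,\phi,\varphi)+o_{p\alpha}(1)$ and (ii) $(\hat\beta_{T\alpha},\hat\phi_{T\alpha},\hat\varphi_{T\alpha})=(\beta^*,\phi^*,\phi^* )+o_{p\alpha}(1)$. Assumption 3. (i) For every $\alpha\in A$ the map $(\pi,\varpi)=\boldsymbol\pi_\alpha(\phi,\varphi)$ from $\Phi\times\Phi$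 onto $\Pi_\alpha:=\boldsymbol\pi_\alpha(\Phi\times\Phi)\subset\mathbb R^{2q_2}$ is one-to-one with $\boldsymbol\pi_\alpha$ and $\boldsymbol\pi_\alpha^{-1}$ continuous. (ii) $\boldsymbol\pi_\alpha(\{(\phi,\phi):\phi\in\Phi\})=\Phi\times\{0\}$ and $\boldsymbol\pi_\alpha(\phi^*,\phi^* )=(\pi^*,0)$ with $\pi^*:=\phi^*$. (iii) $(\hat\beta_{T\alpha},\hat\pi_{T\alpha},\hat\varpi_{T\alpha})=(\beta^*,\pi^*,0)+o_{p\alpha}(1)$, where $(\hat\pi_{T\alpha},\hat\varpi_{T\alpha})=\boldsymbol\pi_\alpha(\hat\phi_{T\alpha},\hat\varphi_{T\alpha})$. The reparameterized log-likelihood is $L^\pi_T(\alpha,\beta,\pi,\varpi)=L_T(\alpha,\beta,\boldsymbol\pi_\alpha^{-1}(\pi,\varpi))$. Assumption 4. For some integer $k\ge2$ and every $\alpha\in A$, $\alpha_t(\alpha,\cdot)$ and $\boldsymbol\pi^{-1}_\alpha$ are $k$ times continuously differentiable on the interiors of $B\times\Phi\times\Phi$ and $\Pi_\alpha$, respectively. Assumption 5. For each $\alpha\in A$ and $(\beta,\pi,\varpi)\in B\times\Pi_\alpha$, with $\boldsymbol\theta=\boldsymbol\theta(\alpha,\beta,\pi,\varpi)$, $L^\pi_T(\alpha,\beta,\pi,\varpi)-L^\pi_T(\alpha,\beta^*,\pi^*,0)=(T^{-1/2}S_{T\alpha})'[T^{1/2}\boldsymbol\theta]-\tfrac12[T^{1/2}\boldsymbol\theta]'\mathcal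 I_\alpha[T^{1/2}\boldsymbol\theta]+R_T(\alpha,\beta,\pi,\varpi)$, where: (i) for each $\alpha$, $\boldsymbol\theta(\alpha,\cdot)$ maps $B\times\Pi_\alpha$ onto $\Theta_\alpha\subset\mathbb R^r$, with (a) $\boldsymbol\theta(\alpha,\beta^*,\pi^*,0)=0$ and (b) for every $\epsilon>0$ there is $\delta_\epsilon>0$ with $\inf_{\alpha\in A}\inf_{(\beta,\pi,\varpi)\in B\times\Pi_\alpha:\|(\beta,\pi,\varpi)-(\beta^*,\pi^*,0)\|\ge\epsilon}\|\boldsymbol\theta(\alpha,\beta,\pi,\varpi)\|\ge\delta_\epsilon$; (ii) $S_{T\alpha}=\sum_{t=1}^Ts_{t\alpha}$ is an $\mathbb R^r$-valued $\mathcal F_T$-measurable process indexed by $\alpha\in A$, not depending on $(\beta,\pi,\varpi)$, with sample paths continuous in $\alpha$, and $T^{-1/2}S_{T\bullet}\Rightarrow S_\bullet$ for a mean-zero $\mathbb R^r$-valued Gaussian process $\{S_\alpha:\alpha\in A\}$ with a.s. continuous sample paths and $E[S_\alpha S_\alpha']=E[s_{t\alpha}s_{t\alpha}']=\mathcal I_\alpha$; (iii) $\mathcal I_\alpha$ is a nonrandom symmetric $r\times r$ matrix not depending on $(\beta,\pi,\varpi)$, continuous in $\alpha$, with $0<\inf_{\alpha\in A}\lambda_{\min}(\mathcal I_\alpha)$ and $\sup_{\alpha\in A}\lambda_{\max}(\mathcal I_\alpha)<\infty$; (iv) for every nonrandom sequence of positive scalars $\gamma_T\to0$, $\sup_{(\beta,\pi,\varpi)\in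 B\times\Pi_\alpha:\|(\beta,\pi,\varpi)-(\beta^*,\pi^*,0)\|\le\gamma_T}|R_T(\alpha,\beta,\pi,\varpi)|/(1+\|T^{1/2}\boldsymbol\theta(\alpha,\beta,\pi,\varpi)\|)^2=o_{p\alpha}(1)$. Assumption 6. $\{\Theta_\alpha,\alpha\in A\}$ is locally uniformly equal to a cone $\Lambda\subset\mathbb R^r$. Assumption 7. With $q_\theta=q_1+q_2$ and $q_\vartheta=r-q_\theta$, $\Lambda=\mathbb R^{q_\theta}\times\Lambda_\vartheta$ for a cone $\Lambda_\vartheta\subset\mathbb R^{q_\vartheta}$. Assumption 8. Partitioning $S_{T\alpha}=(S_{T\theta\alpha},S_{T\vartheta\alpha})$ with $S_{T\theta\alpha}$ of dimension $q_\theta$, $S_{T\theta\alpha}=S^0_T:=\sum_{t=1}^T\nabla f_t(\tilde\phi^* )/f_t(\tilde\phi^* )$ for all $\alpha$. Let $\mathcal I^0=E[(\nabla f_t(\tilde\phi^* )/f_t(\tilde\phi^* ))(\nabla f_t(\tilde\phi^* )/f_t(\tilde\phi^* ))']$. Further notation. $Z_{T\alpha}=\mathcal I_\alpha^{-1}T^{-1/2}S_{T\alpha}$, $Z_\alpha=\mathcal I_\alpha^{-1}S_\alpha$. Partition $S_\alpha=(S_{\theta\alpha},S_{\vartheta\alpha})$, $Z_\alpha=(Z_{\theta\alpha},Z_{\vartheta\alpha})$, $\boldsymbol\lambda=(\boldsymbol\lambda_\theta,\boldsymbol\lambda_\vartheta)$ and $\mathcal I_\alpha$ into blocks $\mathcal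 I_{\theta\theta\alpha},\mathcal I_{\theta\vartheta\alpha},\mathcal I_{\vartheta\theta\alpha},\mathcal I_{\vartheta\vartheta\alpha}$ conformably with dimensions $q_\theta,q_\vartheta$; $(\mathcal I_\alpha^{-1})_{\vartheta\vartheta}$ is the bottom-right $q_\vartheta\times q_\vartheta$ block of $\mathcal I_\alpha^{-1}$. $\Theta_{\alpha,T}=\{T^{1/2}\boldsymbol\theta:\boldsymbol\theta\in\Theta_\alpha\}$. *)

theory Defs
  imports "HOL-Analysis.Analysis" "HOL-Probability.Probability"
begin

section \<open>Coordinate subspaces (embedding of R^q1, R^q2 into R^(p+2))\<close>

definition coordsub :: "'m::finite set \<Rightarrow> (real^'m) set" where
  "coordsub S = {x. \<forall>i. i \<notin> S \<longrightarrow> x $ i = 0}"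

definition proj :: "'m::finite set \<Rightarrow> real^'m \<Rightarrow> real^'m" where
  "proj S v = (\<chi> i. if i \<in> S then v $ i else 0)"

definition dirs3 :: "'m::finite set \<Rightarrow> ((real^'m) \<times> (real^'m) \<times> (real^'m)) set" where
  "dirs3 Sb = {(axis i 1, 0, 0) | i. i \<in> Sb} \<union> {(0, axis i 1, 0) | i. i \<notin> Sb}
              \<union> {(0, 0, axis i 1) | i. i \<notin> Sb}"

definition dirs2 :: "'m::finite set \<Rightarrow> ((real^'m) \<times> (real^'m)) set" where
  "dirs2 Sb = {(axis i 1, 0) | i. i \<notin> Sb} \<union> {(0, axis i 1) | i. i \<notin> Sb}"

definition sub_interior :: "'a::metric_space set \<Rightarrow> 'a set \<Rightarrow> 'a set" where
  "sub_interior V S = {x \<in> S. \<exists>e>0. \<forall>z\<in>V. dist z x < e \<longrightarrow> z \<in> S}"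

fun Ck_dirs :: "'a::real_normed_vector set \<Rightarrow> nat \<Rightarrow> 'a set \<Rightarrow> ('a \<Rightarrow> 'b::real_normed_vector) \<Rightarrow> bool" where
  "Ck_dirs D 0 U f = continuous_on U f"
| "Ck_dirs D (Suc k) U f = (continuous_on U f \<and>
     (\<forall>d\<in>D. \<exists>g. (\<forall>x\<in>U. ((\<lambda>t. f (x + t *\<^sub>R d)) has_vector_derivative g x) (at 0))
                 \<and> Ck_dirs D k U g))"

text \<open>ix enumerates the coordinates of tilde-phi: ix 0 = phi_0, ix i = phi_i (1<=i<=p),
  ix (p+1) = sigma^2.\<close>
definition ar_param_set :: "nat \<Rightarrow> (nat \<Rightarrow> 'm::finite) \<Rightarrow> (real^'m) set" where
  "ar_param_set p ix = {v. (\<forall>z::complex. cmod z \<le> 1 \<longrightarrow>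
        1 - (\<Sum>i=1..p. complex_of_real (v $ ix i) * z ^ i) \<noteq> 0) \<and> 0 < v $ ix (p+1)}"

definition ar_dens :: "nat \<Rightarrow> (nat \<Rightarrow> 'm::finite) \<Rightarrow> (int \<Rightarrow> real) \<Rightarrow> int \<Rightarrow> real^'m \<Rightarrow> real" where
  "ar_dens p ix y t v = (let s = sqrt (v $ ix (p+1)) in
     std_normal_density ((y t - v $ ix 0 - (\<Sum>i=1..p. v $ ix i * y (t - int i))) / s) / s)"

definition lagv :: "nat \<Rightarrow> (int \<Rightarrow> real) \<Rightarrow> int \<Rightarrow> (nat \<Rightarrow> real)" where
  "lagv p y t = (\<lambda>i\<in>{..<p}. y (t - 1 - int i))"

definition mix_loglik :: "nat \<Rightarrow> (nat \<Rightarrow> 'm::finite)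
    \<Rightarrow> (int \<Rightarrow> 'al \<Rightarrow> real^'m \<Rightarrow> real^'m \<Rightarrow> real^'m \<Rightarrow> (nat \<Rightarrow> real) \<Rightarrow> real)
    \<Rightarrow> (int \<Rightarrow> real) \<Rightarrow> nat \<Rightarrow> 'al \<Rightarrow> real^'m \<Rightarrow> real^'m \<Rightarrow> real^'m \<Rightarrow> real" where
  "mix_loglik p ix mixw y T a b \<phi> \<psi> =
     (\<Sum>t\<in>{1..int T}. ln (mixw t a b \<phi> \<psi> (lagv p y t) * ar_dens p ix y t (b + \<phi>)
                        + (1 - mixw t a b \<phi> \<psi> (lagv p y t)) * ar_dens p ix y t (b + \<psi>)))"


text \<open>Reparameterized log-likelihood L^pi_T and the remainder R_T of Assumption 5
  (Sv is the value of S_{T alpha}, th the map theta(alpha,.), Iv the matrix I_alpha).\<close>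
definition lpi :: "nat \<Rightarrow> (nat \<Rightarrow> 'm::finite)
    \<Rightarrow> (int \<Rightarrow> 'al \<Rightarrow> real^'m \<Rightarrow> real^'m \<Rightarrow> real^'m \<Rightarrow> (nat \<Rightarrow> real) \<Rightarrow> real)
    \<Rightarrow> ('al \<Rightarrow> (real^'m) \<times> (real^'m) \<Rightarrow> (real^'m) \<times> (real^'m))
    \<Rightarrow> (int \<Rightarrow> real) \<Rightarrow> nat \<Rightarrow> 'al \<Rightarrow> real^'m \<Rightarrow> real^'m \<Rightarrow> real^'m \<Rightarrow> real" where
  "lpi p ix mixw pinv y T a b pp ww =
     mix_loglik p ix mixw y T a b (fst (pinv a (pp, ww))) (snd (pinv a (pp, ww)))"

definition remT :: "nat \<Rightarrow> (nat \<Rightarrow> 'm::finite)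
    \<Rightarrow> (int \<Rightarrow> 'al \<Rightarrow> real^'m \<Rightarrow> real^'m \<Rightarrow> real^'m \<Rightarrow> (nat \<Rightarrow> real) \<Rightarrow> real)
    \<Rightarrow> ('al \<Rightarrow> (real^'m) \<times> (real^'m) \<Rightarrow> (real^'m) \<times> (real^'m))
    \<Rightarrow> real^'r::finite \<Rightarrow> (real^'m \<Rightarrow> real^'m \<Rightarrow> real^'m \<Rightarrow> real^'r) \<Rightarrow> real^'r^'r
    \<Rightarrow> (int \<Rightarrow> real) \<Rightarrow> nat \<Rightarrow> 'al \<Rightarrow> real^'m \<Rightarrow> real^'m
    \<Rightarrow> real^'m \<Rightarrow> real^'m \<Rightarrow> real^'m \<Rightarrow> real" where
  "remT p ix mixw pinv Sv th Iv y T a bs ps b pp ww =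
     (let x = sqrt (real T) *\<^sub>R th b pp ww in
      lpi p ix mixw pinv y T a b pp ww - lpi p ix mixw pinv y T a bs ps 0
        - ((1 / sqrt (real T)) *\<^sub>R Sv) \<bullet> x + (1/2) * (x \<bullet> (Iv *v x)))"

definition mat_eigvals :: "real^'n^'n \<Rightarrow> real set" where
  "mat_eigvals X = {l. \<exists>v. v \<noteq> 0 \<and> X *v v = l *\<^sub>R v}"

definition lambda_min :: "real^'n^'n \<Rightarrow> real" where
  "lambda_min X = Inf (mat_eigvals X)"

definition lambda_max :: "real^'n^'n \<Rightarrow> real" where
  "lambda_max X = Sup (mat_eigvals X)"

definition outer_prob :: "'w measure \<Rightarrow> 'w set \<Rightarrow> real" where
  "outer_prob M E = Inf {measure M B | B. B \<in> sets M \<and> E \<subseteq> B}"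

definition unif_op1 :: "'w measure \<Rightarrow> (nat \<Rightarrow> 'i set) \<Rightarrow> (nat \<Rightarrow> 'i \<Rightarrow> 'w \<Rightarrow> real) \<Rightarrow> bool" where
  "unif_op1 M I X \<longleftrightarrow> (\<forall>e>0. ((\<lambda>T. outer_prob M {\<omega>\<in>space M. \<exists>i\<in>I T. \<bar>X T i \<omega>\<bar> > e})
                                 \<longlongrightarrow> 0) sequentially)"

definition unif_Op1 :: "'w measure \<Rightarrow> (nat \<Rightarrow> 'i set) \<Rightarrow> (nat \<Rightarrow> 'i \<Rightarrow> 'w \<Rightarrow> real) \<Rightarrow> bool" where
  "unif_Op1 M I X \<longleftrightarrow> (\<forall>e>0. \<exists>K. eventually
      (\<lambda>T. outer_prob M {\<omega>\<in>space M. \<exists>i\<in>I T. \<bar>X T i \<omega>\<bar> > K} < e) sequentially)"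

definition bfun_space :: "'a set \<Rightarrow> ('a \<Rightarrow> 'b::real_normed_vector) set" where
  "bfun_space A = {f. f \<in> extensional A \<and> bounded (f ` A)}"

definition bfun_dist :: "'a set \<Rightarrow> ('a \<Rightarrow> 'b::real_normed_vector) \<Rightarrow> ('a \<Rightarrow> 'b) \<Rightarrow> real" where
  "bfun_dist A f g = (SUP a\<in>A. norm (f a - g a))"

definition bcont_fun :: "'a set \<Rightarrow> (('a \<Rightarrow> 'b::real_normed_vector) \<Rightarrow> real) \<Rightarrow> bool" where
  "bcont_fun A h \<longleftrightarrow> bounded (range h) \<and>
     (\<forall>f\<in>bfun_space A. \<forall>e>0. \<exists>d>0. \<forall>g\<in>bfun_space A. bfun_dist A f g < d \<longrightarrow> \<bar>h f - h g\<bar> < e)"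

definition outer_exp :: "'w measure \<Rightarrow> ('w \<Rightarrow> real) \<Rightarrow> real" where
  "outer_exp M Y = Inf {integral\<^sup>L M U | U. integrable M U \<and> (\<forall>\<omega>\<in>space M. Y \<omega> \<le> U \<omega>)}"

text \<open>Weak convergence (Hoffmann-Joergensen) of X T to Z in B(A, R^r)\<close>
definition weak_conv_bfun :: "'w measure \<Rightarrow> 'v measure \<Rightarrow> 'a set
    \<Rightarrow> (nat \<Rightarrow> 'w \<Rightarrow> 'a \<Rightarrow> 'b::real_normed_vector) \<Rightarrow> ('v \<Rightarrow> 'a \<Rightarrow> 'b) \<Rightarrow> bool" where
  "weak_conv_bfun M N A X Z \<longleftrightarrow> (\<forall>h. bcont_fun A h \<longrightarrow>
     ((\<lambda>T. outer_exp M (\<lambda>\<omega>. h (restrict (X T \<omega>) A))) \<longlongrightarrow> outer_exp N (\<lambda>\<omega>. h (restrict (Z \<omega>) A)))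
       sequentially)"

definition centered_normal_rv :: "'v measure \<Rightarrow> ('v \<Rightarrow> real) \<Rightarrow> bool" where
  "centered_normal_rv N X \<longleftrightarrow> X \<in> borel_measurable N \<and>
     ((\<exists>s>0. distributed N lborel X (normal_density 0 s)) \<or> (AE \<omega> in N. X \<omega> = 0))"

end

theory Submission
  imports Defs
begin


lemma op_sets_ne: "E \<subseteq> space M \<Longrightarrow> {measure M B |B. B \<in> sets M \<and> E \<subseteq> B} \<noteq> {}"
  by auto

lemma op_bdd: "bdd_below {measure M B |B. B \<in> sets M \<and> E \<subseteq> B}"
  by (rule bdd_belowI[of _ 0]) auto

lemma op_nonneg: "E \<subseteq> space M \<Longrightarrow> 0 \<le> outer_prob M E"
  unfolding outer_prob_def by (rule cInf_greatest) auto

lemma op_le_meas: "E \<subseteq> B \<Longrightarrow> B \<in> sets M \<Longrightarrow> outer_prob M E \<le> measure M B"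
  unfolding outer_prob_def by (rule cInf_lower[OF _ op_bdd]) auto

lemma op_mono: "E \<subseteq> F \<Longrightarrow> F \<subseteq> space M \<Longrightarrow> outer_prob M E \<le> outer_prob M F"
  unfolding outer_prob_def
  by (rule cInf_superset_mono[OF op_sets_ne op_bdd]) auto

lemma op_approx:
  assumes "E \<subseteq> space M" "0 < e"
  obtains B where "B \<in> sets M" "E \<subseteq> B" "measure M B < outer_prob M E + e"
proof -
  have "Inf {measure M B |B. B \<in> sets M \<and> E \<subseteq> B} < outer_prob M E + e"
    using assms unfolding outer_prob_def by simp
  then obtain x where "x \<in> {measure M B |B. B \<in> sets M \<and> E \<subseteq> B}" "x < outer_prob M E + e"
    using cInf_less_iff[OF op_sets_ne[OF assms(1)] op_bdd] by blast
  then show ?thesis using that by auto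
qed

lemma op_union:
  assumes "E \<subseteq> space M" "F \<subseteq> space M"
  shows "outer_prob M (E \<union> F) \<le> outer_prob M E + outer_prob M F"
proof (rule field_le_epsilon)
  fix e :: real assume e: "0 < e"
  obtain B1 where B1: "B1 \<in> sets M" "E \<subseteq> B1" "measure M B1 < outer_prob M E + e/2"
    using op_approx[OF assms(1), of "e/2"] e by auto
  obtain B2 where B2: "B2 \<in> sets M" "F \<subseteq> B2" "measure M B2 < outer_prob M F + e/2"
    using op_approx[OF assms(2), of "e/2"] e by auto
  have "outer_prob M (E \<union> F) \<le> measure M (B1 \<union> B2)"
    using B1 B2 by (intro op_le_meas) auto
  also have "\<dots> \<le> measure M B1 + measure M B2"
    using B1 B2 by (simp add: measure_Un_le)
  finally show "outer_prob M (E \<union> F) \<le> outer_prob M E + outer_prob M F + e"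
    using B1 B2 by simp
qed

lemma op_tendsto0:
  assumes "\<And>T. E T \<subseteq> F T \<union> G T" "\<And>T. F T \<subseteq> space M" "\<And>T. G T \<subseteq> space M"
    and "(\<lambda>T. outer_prob M (F T)) \<longlonglongrightarrow> 0" "(\<lambda>T. outer_prob M (G T)) \<longlonglongrightarrow> 0"
  shows "(\<lambda>T. outer_prob M (E T)) \<longlonglongrightarrow> 0"
proof (rule tendsto_sandwich[of "\<lambda>_. 0" _ _ "\<lambda>T. outer_prob M (F T) + outer_prob M (G T)"])
  have sub: "E T \<subseteq> space M" for T using assms(1-3) by blast
  show "\<forall>\<^sub>F n in sequentially. 0 \<le> outer_prob M (E n)" using op_nonneg[OF sub] by simp
  show "\<forall>\<^sub>F n in sequentially. outer_prob M (E n) \<le> outer_prob M (F n) + outer_prob M (G n)"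
  proof (intro always_eventually allI)
    fix T
    have "outer_prob M (E T) \<le> outer_prob M (F T \<union> G T)" using assms by (intro op_mono) auto
    also have "\<dots> \<le> outer_prob M (F T) + outer_prob M (G T)" by (rule op_union) (use assms in auto)
    finally show "outer_prob M (E T) \<le> outer_prob M (F T) + outer_prob M (G T)" .
  qed
  show "(\<lambda>T. outer_prob M (F T) + outer_prob M (G T)) \<longlonglongrightarrow> 0"
    using tendsto_add[OF assms(4,5)] by simp
qed simp


lemma sym_dot:
  fixes I :: "real^'r^'r"
  assumes "transpose I = I"
  shows "v \<bullet> (I *v w) = w \<bullet> (I *v v)"
proof -
  have "v \<bullet> (I *v w) = (v v* I) \<bullet> w" by (simp add: dot_lmul_matrix)
  also have "v v* I = I *v v" using vector_transpose_matrix[of v I] assms by simp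
  finally show ?thesis by (simp add: inner_commute)
qed

lemma quad_aux:
  fixes a b :: real
  assumes "\<forall>t. 0 \<le> 2*t*a + t^2*b"
  shows "a = 0"
proof (rule ccontr)
  assume a: "a \<noteq> 0"
  define B where "B = \<bar>b\<bar> + 1"
  have B: "B > 0" "b \<le> B - 1" unfolding B_def by auto
  have "0 \<le> 2*(-a/B)*a + (-a/B)^2*b" using assms by blast
  hence "0 \<le> B^2 * (2*(-a/B)*a + (-a/B)^2*b)" using B by simp
  also have "B^2 * (2*(-a/B)*a + (-a/B)^2*b) = a^2 * (b - 2*B)"
    using B by (simp add: field_simps power2_eq_square)
  finally have "0 \<le> a^2 * (b - 2*B)" .
  moreover have "a^2 * (b - 2*B) < 0" using a B by (intro mult_pos_neg) auto
  ultimately show False by linarith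
qed

lemma eig_bdd:
  fixes I :: "real^'r^'r"
  shows "bdd_below (mat_eigvals I)"
proof -
  obtain K where K: "\<And>x. norm (I *v x) \<le> norm x * K"
    using bounded_linear.bounded[OF matrix_vector_mul_bounded_linear[of I]] by blast
  show ?thesis
  proof (rule bdd_belowI[of _ "-K"])
    fix l assume "l \<in> mat_eigvals I"
    then obtain v where v: "v \<noteq> 0" "I *v v = l *\<^sub>R v" unfolding mat_eigvals_def by auto
    have "\<bar>l\<bar> * norm v \<le> norm v * K" using K[of v] v by simp
    hence "\<bar>l\<bar> \<le> K" using v by (simp add: mult.commute)
    thus "-K \<le> l" by simp
  qed
qed

lemma quad_lower:
  fixes I :: "real^'r^'r"
  assumes sym: "transpose I = I" and c: "c \<le> lambda_min I"
  shows "c * (norm x)^2 \<le> x \<bullet> (I *v x)"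
proof -
  define q where "q = (\<lambda>x. x \<bullet> (I *v x))"
  have cont: "continuous_on (sphere 0 1) q" unfolding q_def
    by (intro continuous_intros bounded_linear.continuous_on[OF matrix_vector_mul_bounded_linear])
  obtain v where v: "v \<in> sphere 0 1" "\<And>y. y \<in> sphere 0 1 \<Longrightarrow> q v \<le> q y"
    using continuous_attains_inf[OF compact_sphere _ cont] by (auto simp: sphere_eq_empty)
  define m where "m = q v"
  have nv: "norm v = 1" using v by simp
  have lowm: "m * (norm x)^2 \<le> q x" for x
  proof (cases "x = 0")
    case True thus ?thesis by (simp add: q_def)
  next
    case False
    define y where "y = (1/norm x) *\<^sub>R x"
    have "y \<in> sphere 0 1" using False by (simp add: y_def)
    hence "m \<le> q y" using v(2) m_def by simp
    also have "q y = q x / (norm x)^2"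
      by (simp add: q_def y_def matrix_vector_mult_scaleR power2_eq_square)
    finally show ?thesis using False by (simp add: field_simps)
  qed
  have key: "w \<bullet> (I *v v) - m * (v \<bullet> w) = 0" for w
  proof (rule quad_aux[where b = "q w - m * (norm w)^2"], intro allI)
    fix t :: real
    have "m * (norm (v + t *\<^sub>R w))^2 \<le> q (v + t *\<^sub>R w)" by (rule lowm)
    moreover have "q (v + t *\<^sub>R w) = q v + 2*t*(w \<bullet> (I *v v)) + t^2 * q w"
      using sym_dot[OF sym, of v w]
      by (simp add: q_def matrix_vector_right_distrib matrix_vector_mult_scaleR inner_add_left
          inner_add_right algebra_simps power2_eq_square)
    moreover have "(norm (v + t *\<^sub>R w))^2 = 1 + 2*t*(v \<bullet> w) + t^2 * (norm w)^2"
    proof -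
      have vv: "v \<bullet> v = 1" using nv by (metis inner_commute norm_eq_1)
      have ww: "w \<bullet> w = (norm w)^2" by (simp add: power2_norm_eq_inner)
      show ?thesis unfolding power2_norm_eq_inner[of "v + t *\<^sub>R w"]
        by (simp add: inner_add_left inner_add_right vv ww inner_commute algebra_simps power2_eq_square)
    qed
    ultimately show "0 \<le> 2*t*(w \<bullet> (I *v v) - m * (v \<bullet> w)) + t^2*(q w - m * (norm w)^2)"
      unfolding m_def by (simp add: algebra_simps)
  qed
  have "I *v v = m *\<^sub>R v"
  proof -
    define w where "w = I *v v - m *\<^sub>R v"
    have "w \<bullet> (I *v v) - m * (v \<bullet> w) = w \<bullet> w"
      by (simp add: w_def inner_diff_right inner_diff_left inner_commute algebra_simps)
    hence "w \<bullet> w = 0" using key[of w] by simp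
    thus ?thesis unfolding w_def by simp
  qed
  hence "m \<in> mat_eigvals I" using nv unfolding mat_eigvals_def by (auto intro!: exI[of _ v])
  hence "lambda_min I \<le> m" unfolding lambda_min_def by (rule cInf_lower[OF _ eig_bdd])
  hence "c \<le> m" using c by simp
  have "c * (norm x)^2 \<le> m * (norm x)^2" using \<open>c \<le> m\<close> by (simp add: mult_right_mono)
  also have "\<dots> \<le> q x" by (rule lowm)
  finally show ?thesis unfolding q_def .
qed

lemma pd_inv:
  fixes I :: "real^'r^'r"
  assumes sym: "transpose I = I" and c: "c \<le> lambda_min I" "0 < c"
  shows "I *v (matrix_inv I *v u) = u"
proof -
  have "\<forall>x. I *v x = 0 \<longrightarrow> x = 0"
  proof (intro allI impI)
    fix x assume "I *v x = 0"
    hence "c * (norm x)^2 \<le> 0" using quad_lower[OF sym c(1), of x] by simp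
    thus "x = 0" using c(2) by (simp add: mult_le_0_iff)
  qed
  hence "\<exists>B. B ** I = mat 1" using matrix_left_invertible_ker by blast
  hence "invertible I" using invertible_left_inverse by blast
  then obtain A' where "I ** A' = mat 1 \<and> A' ** I = mat 1" unfolding invertible_def by blast
  hence "I ** matrix_inv I = mat 1 \<and> matrix_inv I ** I = mat 1"
    unfolding matrix_inv_def by (rule someI)
  thus ?thesis by (simp add: matrix_vector_mul_assoc)
qed


lemma gamma_exists:
  fixes P :: "nat \<Rightarrow> real \<Rightarrow> real"
  assumes lim: "\<And>e. 0 < e \<Longrightarrow> (\<lambda>T. P T e) \<longlonglongrightarrow> 0" and nn: "\<And>T e. 0 \<le> P T e"
  obtains \<gamma> where "\<forall>T. 0 < \<gamma> T" "\<gamma> \<longlonglongrightarrow> 0" "(\<lambda>T. P T (\<gamma> T)) \<longlonglongrightarrow> 0"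
proof -
  define G where "G T n \<longleftrightarrow> P T (1 / (real n + 1)) < 1 / (real n + 1)" for T n
  define NS where "NS T = {n. n \<le> T \<and> (\<forall>m\<le>n. G T m)}" for T
  define nT where "nT T = (if NS T = {} then 0 else Max (NS T))" for T
  define \<gamma> where "\<gamma> T = 1 / (real (nT T) + 1)" for T
  have Gev: "eventually (\<lambda>T. G T m) sequentially" for m
  proof -
    have "(0::real) < 1 / (real m + 1)" by simp
    from order_tendstoD(2)[OF lim[OF this] this] show ?thesis unfolding G_def by simp
  qed
  have main: "eventually (\<lambda>T. m \<le> nT T \<and> G T (nT T)) sequentially" for m
  proof -
    have "eventually (\<lambda>T. \<forall>m'\<in>{..m}. G T m') sequentially"
      using Gev by (simp add: eventually_ball_finite)
    moreover have "eventually (\<lambda>T. m \<le> T) sequentially" by (rule eventually_ge_at_top)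
    ultimately show ?thesis
    proof eventually_elim
      case (elim T)
      have fin: "finite (NS T)" unfolding NS_def by simp
      have mem: "m \<in> NS T" using elim unfolding NS_def by auto
      hence ne: "NS T \<noteq> {}" by auto
      have "nT T = Max (NS T)" using ne by (simp add: nT_def)
      moreover have "Max (NS T) \<in> NS T" using fin ne by (rule Max_in)
      moreover have "m \<le> Max (NS T)" using fin mem by (rule Max_ge)
      ultimately have i: "nT T \<in> NS T" and ii: "m \<le> nT T" by simp_all
      from i have "G T (nT T)" unfolding NS_def by blast
      with ii show ?case by blast
    qed
  qed
  have pos: "\<forall>T. 0 < \<gamma> T" unfolding \<gamma>_def by simp
  have g0: "\<gamma> \<longlonglongrightarrow> 0"
  proof (rule order_tendstoI)
    fix e :: real assume "0 < e"
    then obtain m :: nat where m0: "inverse (real (Suc m)) < e"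
      using reals_Archimedean by blast
    have m: "1 / (real m + 1) < e" using m0 by (simp add: inverse_eq_divide add.commute)
    show "eventually (\<lambda>T. \<gamma> T < e) sequentially"
      using main[of m]
    proof eventually_elim
      case (elim T)
      have "\<gamma> T \<le> 1 / (real m + 1)" unfolding \<gamma>_def using elim
        by (intro divide_left_mono) auto
      thus ?case using m by simp
    qed
  next
    fix e :: real assume "e < 0"
    show "eventually (\<lambda>T. e < \<gamma> T) sequentially"
    proof (intro always_eventually allI)
      fix T show "e < \<gamma> T" using pos \<open>e < 0\<close> by (meson less_trans)
    qed
  qed
  have "(\<lambda>T. P T (\<gamma> T)) \<longlonglongrightarrow> 0"
  proof (rule tendsto_sandwich[OF _ _ tendsto_const g0])
    show "eventually (\<lambda>T. 0 \<le> P T (\<gamma> T)) sequentially" using nn by simp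
    show "eventually (\<lambda>T. P T (\<gamma> T) \<le> \<gamma> T) sequentially"
      using main[of 0]
    proof eventually_elim
      case (elim T)
      hence "P T (1 / (real (nT T) + 1)) < 1 / (real (nT T) + 1)" unfolding G_def by blast
      thus ?case unfolding \<gamma>_def by simp
    qed
  qed
  thus ?thesis using that pos g0 by blast
qed


lemma clamp_lip:
  fixes x y K :: real
  shows "\<bar>min 1 (max 0 (x - K)) - min 1 (max 0 (y - K))\<bar> \<le> \<bar>x - y\<bar>"
  by (simp add: min_def max_def abs_if)

lemma bdd_norm_img:
  assumes "bounded (f ` A)"
  shows "bdd_above ((\<lambda>a. norm (f a)) ` A)"
proof -
  obtain B where "\<forall>x\<in>f ` A. norm x \<le> B" using assms bounded_iff by metis
  thus ?thesis by (intro bdd_aboveI[of _ B]) auto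
qed

lemma bounded_diff_img:
  fixes f g :: "'a \<Rightarrow> 'b::real_normed_vector"
  assumes "bounded (f ` A)" "bounded (g ` A)"
  shows "bounded ((\<lambda>a. f a - g a) ` A)"
proof -
  obtain B1 where B1: "\<forall>x\<in>f ` A. norm x \<le> B1" using assms bounded_iff by metis
  obtain B2 where B2: "\<forall>x\<in>g ` A. norm x \<le> B2" using assms bounded_iff by metis
  have "\<forall>x\<in>(\<lambda>a. f a - g a) ` A. norm x \<le> B1 + B2"
  proof
    fix x assume "x \<in> (\<lambda>a. f a - g a) ` A"
    then obtain a where "a \<in> A" "x = f a - g a" by auto
    thus "norm x \<le> B1 + B2" using B1 B2 norm_triangle_ineq4[of "f a" "g a"] by force
  qed
  thus ?thesis unfolding bounded_iff by blast
qed

lemma sup_norm_lip: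
  fixes f g :: "'a \<Rightarrow> 'b::real_normed_vector"
  assumes "A \<noteq> {}" "bounded (f ` A)" "bounded (g ` A)"
  shows "(SUP a\<in>A. norm (f a)) \<le> (SUP a\<in>A. norm (g a)) + bfun_dist A f g"
proof -
  have bg: "bdd_above ((\<lambda>a. norm (g a)) ` A)" by (rule bdd_norm_img[OF assms(3)])
  have bd: "bdd_above ((\<lambda>a. norm (f a - g a)) ` A)"
    by (rule bdd_norm_img[OF bounded_diff_img[OF assms(2,3)]])
  show ?thesis
  proof (rule cSUP_least[OF assms(1)])
    fix a assume a: "a \<in> A"
    have "norm (f a) \<le> norm (g a) + norm (f a - g a)" by (metis add.commute norm_triangle_sub)
    also have "norm (g a) \<le> (SUP a\<in>A. norm (g a))" by (rule cSUP_upper[OF a bg])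
    also have "norm (f a - g a) \<le> bfun_dist A f g" unfolding bfun_dist_def by (rule cSUP_upper[OF a bd])
    finally show "norm (f a) \<le> (SUP a\<in>A. norm (g a)) + bfun_dist A f g" by simp
  qed
qed

lemma bfun_dist_sym: "bfun_dist A f g = bfun_dist A g f"
  unfolding bfun_dist_def by (simp add: norm_minus_commute)

lemma h_bcont:
  fixes K :: real
  assumes "A \<noteq> {}"
  shows "bcont_fun A (\<lambda>f::'a \<Rightarrow> 'b::real_normed_vector. min 1 (max 0 ((SUP a\<in>A. norm (f a)) - K)))"
  unfolding bcont_fun_def
proof (intro conjI ballI allI impI)
  show "bounded (range (\<lambda>f::'a \<Rightarrow> 'b. min 1 (max 0 ((SUP a\<in>A. norm (f a)) - K))))"
    unfolding bounded_iff by (intro exI[of _ 1]) auto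
next
  fix f :: "'a \<Rightarrow> 'b" and e :: real assume f: "f \<in> bfun_space A" and e: "0 < e"
  show "\<exists>d>0. \<forall>g\<in>bfun_space A. bfun_dist A f g < d \<longrightarrow>
      \<bar>min 1 (max 0 ((SUP a\<in>A. norm (f a)) - K)) - min 1 (max 0 ((SUP a\<in>A. norm (g a)) - K))\<bar> < e"
  proof (intro exI[of _ e] conjI ballI impI e)
    fix g assume g: "g \<in> bfun_space A" and d: "bfun_dist A f g < e"
    have bf: "bounded (f ` A)" and bg: "bounded (g ` A)" using f g by (auto simp: bfun_space_def)
    have "(SUP a\<in>A. norm (f a)) \<le> (SUP a\<in>A. norm (g a)) + bfun_dist A f g"
      by (rule sup_norm_lip[OF assms bf bg])
    moreover have "(SUP a\<in>A. norm (g a)) \<le> (SUP a\<in>A. norm (f a)) + bfun_dist A f g"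
      using sup_norm_lip[OF assms bg bf] by (simp add: bfun_dist_sym)
    ultimately have "\<bar>(SUP a\<in>A. norm (f a)) - (SUP a\<in>A. norm (g a))\<bar> < e" using d by linarith
    thus "\<bar>min 1 (max 0 ((SUP a\<in>A. norm (f a)) - K)) - min 1 (max 0 ((SUP a\<in>A. norm (g a)) - K))\<bar> < e"
      using clamp_lip[of "SUP a\<in>A. norm (f a)" K "SUP a\<in>A. norm (g a)"] by linarith
  qed
qed


lemma outer_exp_ge_op:
  assumes M: "prob_space M" and Y: "\<And>\<omega>. \<omega> \<in> space M \<Longrightarrow> 0 \<le> Y \<omega> \<and> Y \<omega> \<le> 1"
    and E: "E \<subseteq> space M" and EY: "\<And>\<omega>. \<omega> \<in> E \<Longrightarrow> Y \<omega> = 1"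
  shows "outer_prob M E \<le> outer_exp M Y"
  unfolding outer_exp_def
proof (rule cInf_greatest)
  interpret prob_space M by (rule M)
  show "{integral\<^sup>L M U |U. integrable M U \<and> (\<forall>\<omega>\<in>space M. Y \<omega> \<le> U \<omega>)} \<noteq> {}"
    using Y by (auto intro!: exI[of _ "\<lambda>_. 1"])
  fix x assume "x \<in> {integral\<^sup>L M U |U. integrable M U \<and> (\<forall>\<omega>\<in>space M. Y \<omega> \<le> U \<omega>)}"
  then obtain U where U: "integrable M U" "\<forall>\<omega>\<in>space M. Y \<omega> \<le> U \<omega>" "x = integral\<^sup>L M U" by auto
  have Um: "U \<in> borel_measurable M" using U(1) by auto
  have set: "{\<omega> \<in> space M. 1 \<le> U \<omega>} \<in> sets M" using Um by measurable
  have "outer_prob M E \<le> measure M {\<omega> \<in> space M. 1 \<le> U \<omega>}"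
    by (rule op_le_meas[OF _ set]) (use E EY U(2) in force)
  also have "\<dots> \<le> integral\<^sup>L M U / 1"
    by (rule integral_Markov_inequality_measure[OF U(1) sets.top])
       (intro AE_I2, use U(2) Y in \<open>fastforce\<close>, simp)
  finally show "outer_prob M E \<le> x" using U by simp
qed

lemma outer_exp_le:
  assumes U: "integrable M U" "\<And>\<omega>. \<omega> \<in> space M \<Longrightarrow> Y \<omega> \<le> U \<omega>"
    and Y: "\<And>\<omega>. \<omega> \<in> space M \<Longrightarrow> 0 \<le> Y \<omega>"
  shows "outer_exp M Y \<le> integral\<^sup>L M U"
  unfolding outer_exp_def
proof (rule cInf_lower)
  show "integral\<^sup>L M U \<in> {integral\<^sup>L M U |U. integrable M U \<and> (\<forall>\<omega>\<in>space M. Y \<omega> \<le> U \<omega>)}"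
    using U by auto
  show "bdd_below {integral\<^sup>L M U |U. integrable M U \<and> (\<forall>\<omega>\<in>space M. Y \<omega> \<le> U \<omega>)}"
  proof (rule bdd_belowI[of _ 0], safe)
    fix V assume "integrable M V" "\<forall>\<omega>\<in>space M. Y \<omega> \<le> V \<omega>"
    thus "0 \<le> integral\<^sup>L M V" using Y by (intro integral_nonneg_AE AE_I2) (force intro: order.trans)
  qed
qed


lemma tight:
  fixes X :: "nat \<Rightarrow> 'w \<Rightarrow> 'a::euclidean_space \<Rightarrow> 'b::real_normed_vector"
    and Sl :: "'v \<Rightarrow> 'a \<Rightarrow> 'b"
  assumes M: "prob_space M" and N: "prob_space N" and A: "compact A" "A \<noteq> {}"
    and Xc: "\<And>T \<omega>. \<omega> \<in> space M \<Longrightarrow> continuous_on A (X T \<omega>)"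
    and Sm: "\<And>a. a \<in> A \<Longrightarrow> (\<lambda>\<omega>. Sl \<omega> a) \<in> borel_measurable N"
    and Sc: "AE \<omega> in N. continuous_on A (Sl \<omega>)"
    and weak: "weak_conv_bfun M N A X Sl"
    and e: "0 < e"
  shows "\<exists>K. eventually (\<lambda>T. outer_prob M {\<omega>\<in>space M. \<exists>a\<in>A. K < norm (X T \<omega> a)} < e) sequentially"
proof -
  interpret N: prob_space N by (rule N)
  obtain D where D: "countable D" "D \<subseteq> A" "A \<subseteq> closure D" using separable by blast
  obtain Nul where Nul: "Nul \<in> null_sets N" "\<And>\<omega>. \<omega> \<in> space N - Nul \<Longrightarrow> continuous_on A (Sl \<omega>)"
    using AE_E3[OF Sc] by blast
  have Nsets: "Nul \<in> sets N" using Nul(1) by auto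
  define E where "E K = Nul \<union> {\<omega>\<in>space N. \<exists>d\<in>D. real K < norm (Sl \<omega> d)}" for K :: nat
  have Esets: "E K \<in> sets N" for K
  proof -
    have "{\<omega>\<in>space N. \<exists>d\<in>D. real K < norm (Sl \<omega> d)} \<in> sets N"
    proof (rule sets.sets_Collect_countable_Ex'[OF _ D(1)])
      fix d assume "d \<in> D"
      hence "(\<lambda>\<omega>. Sl \<omega> d) \<in> borel_measurable N" using D Sm by auto
      thus "{\<omega>\<in>space N. real K < norm (Sl \<omega> d)} \<in> sets N" by measurable
    qed
    thus ?thesis unfolding E_def using Nsets by auto
  qed
  have Edec: "antimono_on UNIV E"
    unfolding monotone_on_def E_def
    by (smt (verit, best) Collect_mono_iff Un_mono of_nat_le_iff order_refl)
  have Eint: "(\<Inter>K. E K) \<subseteq> Nul"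
  proof
    fix \<omega> assume w: "\<omega> \<in> (\<Inter>K. E K)"
    show "\<omega> \<in> Nul"
    proof (rule ccontr)
      assume nN: "\<omega> \<notin> Nul"
      have wsp: "\<omega> \<in> space N" using w unfolding E_def using nN by auto
      have "continuous_on A (Sl \<omega>)" using Nul(2) wsp nN by auto
      hence "compact (Sl \<omega> ` A)" using A(1) by (rule compact_continuous_image)
      hence "bounded (Sl \<omega> ` A)" by (rule compact_imp_bounded)
      then obtain B where B: "\<forall>x\<in>Sl \<omega> ` A. norm x \<le> B" unfolding bounded_iff by blast
      obtain K :: nat where K: "B < real K" using reals_Archimedean2 by blast
      have "\<omega> \<in> E K" using w by auto
      then obtain d where "d \<in> D" "real K < norm (Sl \<omega> d)" unfolding E_def using nN by auto
      thus False using B K D(2) by force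
    qed
  qed
  have "(\<lambda>K. measure N (E K)) \<longlonglongrightarrow> measure N (\<Inter>K. E K)"
    by (rule N.finite_Lim_measure_decseq) (use Esets Edec in auto)
  moreover have "measure N (\<Inter>K. E K) = 0"
  proof -
    have "measure N (\<Inter>K. E K) \<le> measure N Nul"
      by (rule N.finite_measure_mono[OF Eint Nsets])
    moreover have "measure N Nul = 0" using Nul(1) by (simp add: measure_eq_0_null_sets)
    ultimately show ?thesis using measure_nonneg[of N "\<Inter>K. E K"] by linarith
  qed
  ultimately have "(\<lambda>K. measure N (E K)) \<longlonglongrightarrow> 0" by simp
  from order_tendstoD(2)[OF this, of "e/2"] e
  have "eventually (\<lambda>K. measure N (E K) < e/2) sequentially" by simp
  then obtain N0 where "\<forall>K\<ge>N0. measure N (E K) < e/2" unfolding eventually_sequentially by blast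
  then obtain K0 where K0: "measure N (E K0) < e/2" by blast
  define h where "h = (\<lambda>f::'a \<Rightarrow> 'b. min 1 (max 0 ((SUP a\<in>A. norm (f a)) - real K0)))"
  have hb: "bcont_fun A h" unfolding h_def by (rule h_bcont[OF A(2)])
  have lim: "(\<lambda>T. outer_exp M (\<lambda>\<omega>. h (restrict (X T \<omega>) A))) \<longlonglongrightarrow> outer_exp N (\<lambda>\<omega>. h (restrict (Sl \<omega>) A))"
    using weak hb unfolding weak_conv_bfun_def by blast
  have h01: "0 \<le> h f \<and> h f \<le> 1" for f unfolding h_def by simp
  have hres: "h (restrict f A) = h f" for f
    unfolding h_def by (intro arg_cong[where f = "\<lambda>x. min 1 (max 0 (x - real K0))"] SUP_cong) auto
  have limN: "outer_exp N (\<lambda>\<omega>. h (restrict (Sl \<omega>) A)) \<le> measure N (E K0)"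
  proof -
    have "outer_exp N (\<lambda>\<omega>. h (restrict (Sl \<omega>) A)) \<le> integral\<^sup>L N (indicator (E K0))"
    proof (rule outer_exp_le)
      show "integrable N (indicator (E K0) :: 'v \<Rightarrow> real)"
        using Esets by (intro integrable_real_indicator) (auto simp: less_top[symmetric])
      show "0 \<le> h (restrict (Sl \<omega>) A)" for \<omega> using h01 by blast
      fix \<omega> assume wsp: "\<omega> \<in> space N"
      show "h (restrict (Sl \<omega>) A) \<le> indicator (E K0) \<omega>"
      proof (cases "\<omega> \<in> E K0")
        case True thus ?thesis using h01 by simp
      next
        case False
        hence nN: "\<omega> \<notin> Nul" and nd: "\<forall>d\<in>D. norm (Sl \<omega> d) \<le> real K0"
          unfolding E_def using wsp by auto
        have c: "continuous_on A (Sl \<omega>)" using Nul(2) wsp nN by auto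
        have clD: "closure D \<subseteq> A" using D(2) compact_imp_closed[OF A(1)] by (rule closure_minimal)
        have "norm (Sl \<omega> a) \<le> real K0" if a: "a \<in> A" for a
        proof (rule continuous_le_on_closure[where S = D])
          show "continuous_on (closure D) (\<lambda>a. norm (Sl \<omega> a))"
            by (intro continuous_on_norm continuous_on_subset[OF c clD])
          show "a \<in> closure D" using a D(3) by auto
          show "\<And>x. x \<in> D \<Longrightarrow> norm (Sl \<omega> x) \<le> real K0" using nd by auto
        qed
        hence "(SUP a\<in>A. norm (Sl \<omega> a)) \<le> real K0" by (intro cSUP_least[OF A(2)])
        hence "h (Sl \<omega>) = 0" unfolding h_def by simp
        thus ?thesis using hres by simp
      qed
    qed
    thus ?thesis using Esets by simp
  qed
  have "eventually (\<lambda>T. outer_exp M (\<lambda>\<omega>. h (restrict (X T \<omega>) A)) < e) sequentially"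
  proof (rule order_tendstoD(2)[OF lim])
    show "outer_exp N (\<lambda>\<omega>. h (restrict (Sl \<omega>) A)) < e"
      using limN K0 measure_nonneg[of N "E K0"] by linarith
  qed
  hence "eventually (\<lambda>T. outer_prob M {\<omega>\<in>space M. \<exists>a\<in>A. real K0 + 1 < norm (X T \<omega> a)} < e) sequentially"
  proof eventually_elim
    case (elim T)
    have "outer_prob M {\<omega>\<in>space M. \<exists>a\<in>A. real K0 + 1 < norm (X T \<omega> a)}
        \<le> outer_exp M (\<lambda>\<omega>. h (restrict (X T \<omega>) A))"
    proof (rule outer_exp_ge_op[OF M])
      show "0 \<le> h (restrict (X T \<omega>) A) \<and> h (restrict (X T \<omega>) A) \<le> 1" for \<omega> by (rule h01)
      show "{\<omega>\<in>space M. \<exists>a\<in>A. real K0 + 1 < norm (X T \<omega> a)} \<subseteq> space M" by auto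
      fix \<omega> assume "\<omega> \<in> {\<omega>\<in>space M. \<exists>a\<in>A. real K0 + 1 < norm (X T \<omega> a)}"
      then obtain a where wsp: "\<omega> \<in> space M" and a: "a \<in> A" "real K0 + 1 < norm (X T \<omega> a)" by auto
      have "compact (X T \<omega> ` A)" by (rule compact_continuous_image[OF Xc[OF wsp] A(1)])
      hence "bounded (X T \<omega> ` A)" by (rule compact_imp_bounded)
      hence "norm (X T \<omega> a) \<le> (SUP a\<in>A. norm (X T \<omega> a))"
        by (intro cSUP_upper[OF a(1)] bdd_norm_img)
      hence "h (X T \<omega>) = 1" unfolding h_def using a(2) by simp
      thus "h (restrict (X T \<omega>) A) = 1" using hres by simp
    qed
    thus ?case using elim by simp
  qed
  thus ?thesis by blast
qed


lemma ar_dens_bound: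
  assumes "0 < s0" "s0 \<le> v $ ix (p+1)"
  shows "0 < ar_dens p ix y t v \<and> ar_dens p ix y t v \<le> 1 / sqrt s0"
proof -
  define s where "s = sqrt (v $ ix (p+1))"
  define z where "z = (y t - v $ ix 0 - (\<Sum>i=1..p. v $ ix i * y (t - int i))) / s"
  have s: "0 < s" "sqrt s0 \<le> s" using assms by (auto simp: s_def)
  have d: "ar_dens p ix y t v = std_normal_density z / s"
    unfolding ar_dens_def Let_def s_def z_def by simp
  have p: "0 < std_normal_density z" by (simp add: normal_density_pos)
  have le1: "std_normal_density z \<le> 1"
  proof -
    have eq: "std_normal_density z = exp (- (z^2/2)) / sqrt (2*pi)" by (simp add: normal_density_def)
    have e1: "exp (- (z^2/2)) \<le> 1" by simp
    have s1: "1 \<le> sqrt (2*pi)" using pi_gt3 by simp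
    have "exp (- (z^2/2)) / sqrt (2*pi) \<le> 1 / sqrt (2*pi)" using e1 s1 by (simp add: divide_right_mono)
    also have "\<dots> \<le> 1" using s1 by simp
    finally show ?thesis using eq by simp
  qed
  have "std_normal_density z / s \<le> 1 / s" using le1 s by (simp add: divide_right_mono)
  also have "1 / s \<le> 1 / sqrt s0" using s assms by (simp add: frac_le)
  finally show ?thesis using d p s by simp
qed

lemma mix_le:
  fixes w f g :: "int \<Rightarrow> real"
  assumes "\<And>t. t \<in> {1..int T} \<Longrightarrow> 0 < w t \<and> w t < 1 \<and> 0 < f t \<and> f t \<le> C \<and> 0 < g t \<and> g t \<le> C"
  shows "(\<Sum>t\<in>{1..int T}. ln (w t * f t + (1 - w t) * g t)) \<le> real T * C"
proof -
  have "(\<Sum>t\<in>{1..int T}. ln (w t * f t + (1 - w t) * g t)) \<le> of_nat (card {1..int T}) * C"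
  proof (rule sum_bounded_above)
    fix t assume t: "t \<in> {1..int T}"
    note a = assms[OF t]
    have pos: "0 < w t * f t + (1 - w t) * g t" using a by (intro add_pos_nonneg) auto
    have "w t * f t + (1 - w t) * g t \<le> w t * C + (1 - w t) * C"
      using a by (intro add_mono mult_left_mono) auto
    hence le: "w t * f t + (1 - w t) * g t \<le> C" by (simp add: algebra_simps)
    have "ln (w t * f t + (1 - w t) * g t) \<le> w t * f t + (1 - w t) * g t - 1"
      using pos by (rule ln_le_minus_one)
    thus "ln (w t * f t + (1 - w t) * g t) \<le> C" using le by linarith
  qed
  thus ?thesis by simp
qed

lemma lin1:
  fixes x1 x2 x3 x4 x5 x6 :: real
  assumes "- 1 \<le> x4" "x5 \<le> x2" "x1 \<le> x6" "x3 = x4 - x5 + x6/2"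
  shows "x1 \<le> 2 * x3 + 2 + 2 * x2"
proof -
  have "x6 = 2*x3 - 2*x4 + 2*x5" using assms(4) by simp
  thus ?thesis using assms(1-3) by linarith
qed

lemma arith_bound:
  fixes c n Ku r Rh D ux q :: real
  assumes "0 < c" "0 \<le> n" "Rh = r * (1+n)^2" "\<bar>r\<bar> \<le> c/8" "-1 \<le> D" "ux \<le> Ku * n"
    "c * n^2 \<le> q" "Rh = D - ux + q/2" "0 \<le> Ku"
  shows "n \<le> 1 + (4*Ku+4+c)/c"
proof (cases "n \<le> 1")
  case True
  have "0 \<le> (4*Ku+4+c)/c" using assms by simp
  thus ?thesis using True by linarith
next
  case False
  have "\<bar>Rh\<bar> \<le> c/8 * (1+n)^2" 
  proof -
    have "\<bar>Rh\<bar> = \<bar>r\<bar> * (1+n)^2" using assms(3) by (simp add: abs_mult)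
    also have "\<dots> \<le> c/8 * (1+n)^2" using assms(4) by (intro mult_right_mono) auto
    finally show ?thesis .
  qed
  moreover have "(1+n)^2 \<le> 2 * (1 + n^2)"
  proof -
    have "(1+n)^2 = 1 + 2*n + n^2" "(n-1)^2 = n^2 - 2*n + 1"
      by (simp_all add: power2_eq_square algebra_simps)
    moreover have "0 \<le> (n-1)^2" by simp
    ultimately show ?thesis by (smt (verit))
  qed
  ultimately have "\<bar>Rh\<bar> \<le> c/8 * (2 * (1 + n^2))" using assms(1)
    by (meson order.trans mult_left_mono less_imp_le divide_nonneg_pos zero_less_numeral)
  hence R: "\<bar>Rh\<bar> \<le> c/4 * (1 + n^2)" by (simp add: algebra_simps)
  have "c * n^2 \<le> 2 * Rh + 2 + 2 * (Ku * n)" by (rule lin1[OF assms(5,6,7,8)])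
  moreover have "2 * Rh \<le> c/2 + c/2 * n^2"
  proof -
    have "Rh \<le> \<bar>Rh\<bar>" by simp
    hence "2 * Rh \<le> 2 * (c/4 * (1 + n^2))" using R by linarith
    also have "2 * (c/4 * (1 + n^2)) = c/2 + c/2 * n^2" by (simp add: algebra_simps)
    finally show ?thesis .
  qed
  ultimately have "c * n^2 \<le> c/2 + c/2 * n^2 + 2 + 2 * (Ku * n)" by linarith
  hence A1: "c/2 * n^2 \<le> c/2 + 2 + 2 * (Ku * n)" by linarith
  have npos: "0 < n" using False by simp
  have "(c/2 + 2) * 1 \<le> (c/2 + 2) * n" using False assms(1) by (intro mult_left_mono) auto
  hence A2: "c/2 + 2 \<le> (c/2 + 2) * n" by simp
  have e1: "(c/2 * n) * n = c/2 * n^2" by (simp add: power2_eq_square)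
  have e2: "(c/2 + 2 + 2 * Ku) * n = (c/2 + 2) * n + 2 * (Ku * n)" by (simp add: algebra_simps)
  have "(c/2 * n) * n \<le> (c/2 + 2 + 2 * Ku) * n" unfolding e1 e2 using A1 A2 by linarith
  hence A3: "c/2 * n \<le> c/2 + 2 + 2 * Ku" using npos by (rule mult_right_le_imp_le)
  have cpos: "0 < c/2" using assms(1) by simp
  have "n \<le> (c/2 + 2 + 2*Ku) / (c/2)" using A3 cpos by (simp add: pos_le_divide_eq mult.commute)
  also have "\<dots> = (4*Ku+4+c)/c" using assms(1) by (simp add: field_simps)
  finally have "n \<le> (4*Ku+4+c)/c" .
  thus ?thesis by linarith
qed

theorem lemma1:
  fixes M :: "'w measure" and N :: "'v measure"
    and p k :: nat
    and ix :: "nat \<Rightarrow> 'm::finite"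
    and Sb :: "'m set"
    and y eps :: "int \<Rightarrow> 'w \<Rightarrow> real"
    and phis :: "real^'m"
    and Phit :: "(real^'m) set"
    and A :: "'al::euclidean_space set"
    and B Phi :: "(real^'m) set"
    and mixw :: "int \<Rightarrow> 'al \<Rightarrow> real^'m \<Rightarrow> real^'m \<Rightarrow> real^'m \<Rightarrow> (nat \<Rightarrow> real) \<Rightarrow> real"
    and bh ph vh :: "nat \<Rightarrow> 'al \<Rightarrow> 'w \<Rightarrow> real^'m"
    and pmap pinv :: "'al \<Rightarrow> (real^'m) \<times> (real^'m) \<Rightarrow> (real^'m) \<times> (real^'m)"
    and theta :: "'al \<Rightarrow> real^'m \<Rightarrow> real^'m \<Rightarrow> real^'m \<Rightarrow> real^'r::finite"
    and s :: "nat \<Rightarrow> 'al \<Rightarrow> 'w \<Rightarrow> real^'r"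
    and S :: "'al \<Rightarrow> 'v \<Rightarrow> real^'r"
    and Info :: "'al \<Rightarrow> real^'r^'r"
  defines "bs \<equiv> proj Sb phis"
    and "phs \<equiv> proj (- Sb) phis"
    and "Pia \<equiv> \<lambda>a. pmap a ` (Phi \<times> Phi)"
    and "L \<equiv> \<lambda>T a b \<phi> \<psi> \<omega>. mix_loglik p ix mixw (\<lambda>t. y t \<omega>) T a b \<phi> \<psi>"
    and "Lpi \<equiv> \<lambda>T a b pp w \<omega>. lpi p ix mixw pinv (\<lambda>t. y t \<omega>) T a b pp w"
    and "ST \<equiv> \<lambda>T a \<omega>. \<Sum>t=1..T. s t a \<omega>"
    and "R \<equiv> \<lambda>T a b pp w \<omega>. remT p ix mixw pinv (\<Sum>t=1..T. s t a \<omega>) (theta a) (Info a)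
                              (\<lambda>t. y t \<omega>) T a (proj Sb phis) (proj (- Sb) phis) b pp w"
    and "Z \<equiv> \<lambda>T a \<omega>. matrix_inv (Info a) *v ((1 / sqrt (real T)) *\<^sub>R (\<Sum>t=1..T. s t a \<omega>))"
    and "pih \<equiv> \<lambda>T a \<omega>. fst (pmap a (ph T a \<omega>, vh T a \<omega>))"
    and "vph \<equiv> \<lambda>T a \<omega>. snd (pmap a (ph T a \<omega>, vh T a \<omega>))"
    and "thh \<equiv> \<lambda>T a \<omega>. theta a (bh T a \<omega>) (fst (pmap a (ph T a \<omega>, vh T a \<omega>)))
                                  (snd (pmap a (ph T a \<omega>, vh T a \<omega>)))"
  assumes
    \<comment> \<open>Assumption 1 (i)\<close>
        M: "prob_space M"
    and p: "1 \<le> p"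
    and ix: "bij_betw ix {..<p+2} UNIV"
    and y_meas: "\<forall>t. y t \<in> borel_measurable M"
    and eps_meas: "\<forall>t. eps t \<in> borel_measurable M"
    and AR: "\<forall>t. \<forall>\<omega>\<in>space M. y t \<omega> = phis $ ix 0 + (\<Sum>i=1..p. phis $ ix i * y (t - int i) \<omega>)
                                    + sqrt (phis $ ix (p+1)) * eps t \<omega>"
    and stationary: "\<forall>(s0::int) n. distr M (PiM {..<n} (\<lambda>_. borel)) (\<lambda>\<omega>. \<lambda>i\<in>{..<n}. y (s0 + int i) \<omega>)
                          = distr M (PiM {..<n} (\<lambda>_. borel)) (\<lambda>\<omega>. \<lambda>i\<in>{..<n}. y (int i) \<omega>)"
    and eps_indep: "prob_space.indep_vars M (\<lambda>_. borel) eps UNIV"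
    and eps_normal: "\<forall>t. distributed M lborel (eps t) std_normal_density"
    and eps_past: "\<forall>t. prob_space.indep_set M (sets (vimage_algebra (space M) (eps t) borel))
                   (sets (vimage_algebra (space M) (\<lambda>\<omega>. \<lambda>j::nat. y (t - 1 - int j) \<omega>)
                                         (PiM UNIV (\<lambda>_. borel))))"
    and Phit: "compact Phit" "Phit \<subseteq> ar_param_set p ix" "phis \<in> interior Phit"
    \<comment> \<open>Assumption 1 (ii)\<close>
    and A: "compact A"
    and Sb: "Sb \<noteq> UNIV"
    and B: "compact B" "B \<subseteq> coordsub Sb"
    and Phi: "compact Phi" "Phi \<subseteq> coordsub (- Sb)"
    and BPhi: "\<forall>b\<in>coordsub Sb. \<forall>\<phi>\<in>coordsub (- Sb). (b \<in> B \<and> \<phi> \<in> Phi) \<longleftrightarrow> b + \<phi> \<in> Phit"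
    \<comment> \<open>Assumption 1 (iii)\<close>
    and mixw: "\<forall>t. \<forall>a\<in>A. \<forall>b\<in>B. \<forall>\<phi>\<in>Phi. \<forall>\<psi>\<in>Phi.
                  mixw t a b \<phi> \<psi> \<in> borel_measurable (PiM {..<p} (\<lambda>_. borel)) \<and>
                  (\<forall>\<omega>\<in>space M. 0 < mixw t a b \<phi> \<psi> (lagv p (\<lambda>t. y t \<omega>) t)
                                 \<and> mixw t a b \<phi> \<psi> (lagv p (\<lambda>t. y t \<omega>) t) < 1)"
    \<comment> \<open>Assumption 2\<close>
    and est_in: "\<forall>T. \<forall>a\<in>A. \<forall>\<omega>\<in>space M. bh T a \<omega> \<in> B \<and> ph T a \<omega> \<in> Phi \<and> vh T a \<omega> \<in> Phi"
    and est_max: "unif_op1 M (\<lambda>_. A) (\<lambda>T a \<omega>. L T a (bh T a \<omega>) (ph T a \<omega>) (vh T a \<omega>) \<omega>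
                    - (SUP x\<in>B \<times> Phi \<times> Phi. L T a (fst x) (fst (snd x)) (snd (snd x)) \<omega>))"
    and est_cons: "unif_op1 M (\<lambda>_. A) (\<lambda>T a \<omega>. norm ((bh T a \<omega>, ph T a \<omega>, vh T a \<omega>) - (bs, phs, phs)))"
    \<comment> \<open>Assumption 3\<close>
    and pmap: "\<forall>a\<in>A. inj_on (pmap a) (Phi \<times> Phi) \<and> continuous_on (Phi \<times> Phi) (pmap a)
                 \<and> Pia a \<subseteq> coordsub (- Sb) \<times> coordsub (- Sb)
                 \<and> (\<forall>x\<in>Phi \<times> Phi. pinv a (pmap a x) = x) \<and> continuous_on (Pia a) (pinv a)"
    and pmap_diag: "\<forall>a\<in>A. pmap a ` {(\<phi>, \<phi>) | \<phi>. \<phi> \<in> Phi} = Phi \<times> {0} \<and> pmap a (phs, phs) = (phs, 0)"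
    and est_cons_pi: "unif_op1 M (\<lambda>_. A) (\<lambda>T a \<omega>. norm ((bh T a \<omega>, pih T a \<omega>, vph T a \<omega>) - (bs, phs, 0)))"
    \<comment> \<open>Assumption 4\<close>
    and k: "2 \<le> k"
    and mixw_Ck: "\<forall>a\<in>A. \<forall>t. \<forall>\<omega>\<in>space M. Ck_dirs (dirs3 Sb) k
                   (sub_interior (coordsub Sb \<times> coordsub (- Sb) \<times> coordsub (- Sb)) (B \<times> Phi \<times> Phi))
                   (\<lambda>x. mixw t a (fst x) (fst (snd x)) (snd (snd x)) (lagv p (\<lambda>t. y t \<omega>) t))"
    and pinv_Ck: "\<forall>a\<in>A. Ck_dirs (dirs2 Sb) k
                   (sub_interior (coordsub (- Sb) \<times> coordsub (- Sb)) (Pia a)) (pinv a)"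
    \<comment> \<open>Assumption 5 (i)\<close>
    and theta0: "\<forall>a\<in>A. theta a bs phs 0 = 0"
    and theta_sep: "\<forall>e>0. \<exists>d>0. \<forall>a\<in>A. \<forall>b\<in>B. \<forall>pv\<in>Pia a.
                      e \<le> norm ((b, pv) - (bs, phs, 0)) \<longrightarrow> d \<le> norm (theta a b (fst pv) (snd pv))"
    \<comment> \<open>Assumption 5 (ii)\<close>
    and ST_meas: "\<forall>T. \<forall>a\<in>A. (\<lambda>\<omega>. ST T a \<omega>) \<in> measurable
                    (vimage_algebra (space M) (\<lambda>\<omega>. \<lambda>j::nat. y (int T - int j) \<omega>) (PiM UNIV (\<lambda>_. borel))) borel"
    and ST_cont: "\<forall>T. \<forall>\<omega>\<in>space M. continuous_on A (\<lambda>a. ST T a \<omega>)"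
    and N: "prob_space N"
    and S_meas: "\<forall>a\<in>A. S a \<in> borel_measurable N"
    and S_gauss: "\<forall>F c. finite F \<and> F \<subseteq> A \<longrightarrow> centered_normal_rv N (\<lambda>\<omega>. \<Sum>a\<in>F. c a \<bullet> S a \<omega>)"
    and S_cont: "AE \<omega> in N. continuous_on A (\<lambda>a. S a \<omega>)"
    and weak: "weak_conv_bfun M N A (\<lambda>T \<omega> a. (1 / sqrt (real T)) *\<^sub>R ST T a \<omega>) (\<lambda>\<omega> a. S a \<omega>)"
    and S_cov: "\<forall>a\<in>A. \<forall>i j. integrable N (\<lambda>\<omega>. S a \<omega> $ i * S a \<omega> $ j)
                     \<and> (\<integral>\<omega>. S a \<omega> $ i * S a \<omega> $ j \<partial>N) = Info a $ i $ j"
    and s_cov: "\<forall>t\<ge>1. \<forall>a\<in>A. \<forall>i j. integrable M (\<lambda>\<omega>. s t a \<omega> $ i * s t a \<omega> $ j)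
                     \<and> (\<integral>\<omega>. s t a \<omega> $ i * s t a \<omega> $ j \<partial>M) = Info a $ i $ j"
    \<comment> \<open>Assumption 5 (iii)\<close>
    and Info_sym: "\<forall>a\<in>A. transpose (Info a) = Info a"
    and Info_cont: "continuous_on A Info"
    and Info_min: "\<exists>c>0. \<forall>a\<in>A. c \<le> lambda_min (Info a)"
    and Info_max: "\<exists>C. \<forall>a\<in>A. lambda_max (Info a) \<le> C"
    \<comment> \<open>Assumption 5 (iv)\<close>
    and R_small: "\<forall>\<gamma>::nat \<Rightarrow> real. (\<forall>T. 0 < \<gamma> T) \<and> \<gamma> \<longlonglongrightarrow> 0 \<longrightarrow>
        unif_op1 M (\<lambda>T. {(a, b, pv). a \<in> A \<and> b \<in> B \<and> pv \<in> Pia a \<and> norm ((b, pv) - (bs, phs, 0)) \<le> \<gamma> T})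
          (\<lambda>T x \<omega>. case x of (a, b, pv) \<Rightarrow>
             R T a b (fst pv) (snd pv) \<omega> / (1 + norm (sqrt (real T) *\<^sub>R theta a b (fst pv) (snd pv)))\<^sup>2)"
  shows "unif_Op1 M (\<lambda>_. A) (\<lambda>T a \<omega>. norm (sqrt (real T) *\<^sub>R thh T a \<omega>))
    \<and> unif_op1 M (\<lambda>_. A) (\<lambda>T a \<omega>. R T a (bh T a \<omega>) (pih T a \<omega>) (vph T a \<omega>) \<omega>)
    \<and> unif_op1 M (\<lambda>_. A) (\<lambda>T a \<omega>.
           (Lpi T a (bh T a \<omega>) (pih T a \<omega>) (vph T a \<omega>) \<omega> - Lpi T a bs phs 0 \<omega>)
           - ((1/2) * (Z T a \<omega> \<bullet> (Info a *v Z T a \<omega>))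
              - (1/2) * ((sqrt (real T) *\<^sub>R thh T a \<omega> - Z T a \<omega>)
                           \<bullet> (Info a *v (sqrt (real T) *\<^sub>R thh T a \<omega> - Z T a \<omega>)))))"
proof -
  note defs = assms(1-11)
  interpret MP: prob_space M by (rule M)
  have op0: "outer_prob M {} = 0"
    using op_nonneg[of "{}" M] op_le_meas[of "{}" "{}" M] by simp
  show ?thesis
  proof (cases "A = {}")
    case True
    show ?thesis using True op0 unfolding unif_op1_def unif_Op1_def by simp
  next
    case Ane: False
    have phis_in: "phis \<in> Phit" using Phit(3) interior_subset by blast
    have bs_c: "bs \<in> coordsub Sb" unfolding defs coordsub_def proj_def by simp
    have phs_c: "phs \<in> coordsub (- Sb)" unfolding defs coordsub_def proj_def by simp
    have bsphs: "bs + phs = phis" unfolding defs proj_def by (simp add: vec_eq_iff)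
    have bsB: "bs \<in> B" and phsPhi: "phs \<in> Phi" using BPhi bs_c phs_c bsphs phis_in by auto
    obtain s0 where s0: "0 < s0" "\<And>v. v \<in> Phit \<Longrightarrow> s0 \<le> v $ ix (p+1)"
    proof -
      have "continuous_on Phit (\<lambda>v. v $ ix (p+1))"
        by (rule bounded_linear.continuous_on[OF bounded_linear_vec_nth continuous_on_id])
      then obtain v0 where v0: "v0 \<in> Phit" "\<And>v. v \<in> Phit \<Longrightarrow> v0 $ ix (p+1) \<le> v $ ix (p+1)"
        using continuous_attains_inf[OF Phit(1)] phis_in by blast
      have "0 < v0 $ ix (p+1)" using v0(1) Phit(2) unfolding ar_param_set_def by auto
      thus ?thesis using that v0 by blast
    qed
    have Lbdd: "bdd_above ((\<lambda>x. L T a (fst x) (fst (snd x)) (snd (snd x)) \<omega>) ` (B \<times> Phi \<times> Phi))"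
      if w: "\<omega> \<in> space M" and a: "a \<in> A" for T a \<omega>
    proof (rule bdd_aboveI2[of _ _ "real T * (1 / sqrt s0)"])
      fix xx assume xx: "xx \<in> B \<times> Phi \<times> Phi"
      obtain b \<phi> \<psi> where xxe: "xx = (b, \<phi>, \<psi>)" and b: "b \<in> B" and ph: "\<phi> \<in> Phi" and ps: "\<psi> \<in> Phi"
        using xx by auto
      have bp: "b + \<phi> \<in> Phit" using BPhi b ph B(2) Phi(2) by blast
      have bq: "b + \<psi> \<in> Phit" using BPhi b ps B(2) Phi(2) by blast
      have "mix_loglik p ix mixw (\<lambda>t. y t \<omega>) T a b \<phi> \<psi> \<le> real T * (1 / sqrt s0)"
        unfolding mix_loglik_def
      proof (rule mix_le)
        fix t assume "t \<in> {1..int T}"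
        show "0 < mixw t a b \<phi> \<psi> (lagv p (\<lambda>t. y t \<omega>) t) \<and> mixw t a b \<phi> \<psi> (lagv p (\<lambda>t. y t \<omega>) t) < 1 \<and>
          0 < ar_dens p ix (\<lambda>t. y t \<omega>) t (b + \<phi>) \<and> ar_dens p ix (\<lambda>t. y t \<omega>) t (b + \<phi>) \<le> 1 / sqrt s0 \<and>
          0 < ar_dens p ix (\<lambda>t. y t \<omega>) t (b + \<psi>) \<and> ar_dens p ix (\<lambda>t. y t \<omega>) t (b + \<psi>) \<le> 1 / sqrt s0"
          using mixw a b ph ps w ar_dens_bound[where v="b+\<phi>" and y="\<lambda>t. y t \<omega>" and t=t and ix=ix and p=p, OF s0(1) s0(2)[OF bp]]
            ar_dens_bound[where v="b+\<psi>" and y="\<lambda>t. y t \<omega>" and t=t and ix=ix and p=p, OF s0(1) s0(2)[OF bq]]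
          by blast
      qed
      thus "L T a (fst xx) (fst (snd xx)) (snd (snd xx)) \<omega> \<le> real T * (1 / sqrt s0)"
        unfolding xxe defs by simp
    qed
    obtain c where c: "0 < c" "\<And>a. a \<in> A \<Longrightarrow> c \<le> lambda_min (Info a)" using Info_min by blast
    have quad: "c * (norm v)^2 \<le> v \<bullet> (Info a *v v)" if "a \<in> A" for a v
      using quad_lower[OF _ c(2)[OF that]] Info_sym that by blast
    have inv: "Info a *v (matrix_inv (Info a) *v v) = v" if "a \<in> A" for a v
      using pd_inv[OF _ c(2)[OF that] c(1)] Info_sym that by blast
    define xv where "xv T a \<omega> = sqrt (real T) *\<^sub>R thh T a \<omega>" for T a \<omega>
    define uv where "uv T a \<omega> = (1 / sqrt (real T)) *\<^sub>R ST T a \<omega>" for T a \<omega>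
    define DD where "DD T a \<omega> = Lpi T a (bh T a \<omega>) (pih T a \<omega>) (vph T a \<omega>) \<omega> - Lpi T a bs phs 0 \<omega>" for T a \<omega>
    define Rh where "Rh T a \<omega> = R T a (bh T a \<omega>) (pih T a \<omega>) (vph T a \<omega>) \<omega>" for T a \<omega>
    define e1 where "e1 T a \<omega> = L T a (bh T a \<omega>) (ph T a \<omega>) (vh T a \<omega>) \<omega>
                    - (SUP x\<in>B \<times> Phi \<times> Phi. L T a (fst x) (fst (snd x)) (snd (snd x)) \<omega>)" for T a \<omega>
    define rr where "rr T a \<omega> = Rh T a \<omega> / (1 + norm (xv T a \<omega>))^2" for T a \<omega>
    have P1: "Rh T a \<omega> = DD T a \<omega> - uv T a \<omega> \<bullet> xv T a \<omega> + 1/2 * (xv T a \<omega> \<bullet> (Info a *v xv T a \<omega>))" for T a \<omega>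
      unfolding Rh_def DD_def uv_def xv_def defs remT_def Let_def by simp
    have P2: "e1 T a \<omega> \<le> DD T a \<omega>" if w: "\<omega> \<in> space M" and a: "a \<in> A" for T a \<omega>
    proof -
      have est: "bh T a \<omega> \<in> B" "ph T a \<omega> \<in> Phi" "vh T a \<omega> \<in> Phi" using est_in w a by auto
      have pe: "pinv a (pmap a (ph T a \<omega>, vh T a \<omega>)) = (ph T a \<omega>, vh T a \<omega>)" using pmap a est by auto
      have "Lpi T a (bh T a \<omega>) (pih T a \<omega>) (vph T a \<omega>) \<omega> = L T a (bh T a \<omega>) (ph T a \<omega>) (vh T a \<omega>) \<omega>"
        unfolding defs lpi_def using pe by simp
      moreover have "Lpi T a bs phs 0 \<omega> = L T a bs phs phs \<omega>"
      proof -
        have "pmap a (phs, phs) = (phs, 0)" using pmap_diag a by auto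
        hence "pinv a (phs, 0) = (phs, phs)" using pmap a phsPhi by (metis mem_Sigma_iff)
        thus ?thesis using assms(4,5) unfolding lpi_def by simp
      qed
      moreover have "L T a bs phs phs \<omega> \<le> (SUP x\<in>B \<times> Phi \<times> Phi. L T a (fst x) (fst (snd x)) (snd (snd x)) \<omega>)"
        using cSUP_upper[OF _ Lbdd[OF w a], of "(bs, phs, phs)"] bsB phsPhi by simp
      ultimately show ?thesis unfolding e1_def DD_def by linarith
    qed
    have P6: "(Lpi T a (bh T a \<omega>) (pih T a \<omega>) (vph T a \<omega>) \<omega> - Lpi T a bs phs 0 \<omega>)
           - ((1/2) * (Z T a \<omega> \<bullet> (Info a *v Z T a \<omega>))
              - (1/2) * ((sqrt (real T) *\<^sub>R thh T a \<omega> - Z T a \<omega>)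
                           \<bullet> (Info a *v (sqrt (real T) *\<^sub>R thh T a \<omega> - Z T a \<omega>)))) = Rh T a \<omega>"
      if a: "a \<in> A" for T a \<omega>
    proof -
      define zz where "zz = Z T a \<omega>"
      define I where "I = Info a"
      have Iz: "I *v zz = uv T a \<omega>" unfolding zz_def I_def uv_def defs using inv[OF a] by simp
      have sy: "zz \<bullet> (I *v xv T a \<omega>) = xv T a \<omega> \<bullet> (I *v zz)" unfolding I_def
        by (rule sym_dot) (use Info_sym a in auto)
      have "(xv T a \<omega> - zz) \<bullet> (I *v (xv T a \<omega> - zz))
          = xv T a \<omega> \<bullet> (I *v xv T a \<omega>) - 2 * (xv T a \<omega> \<bullet> (I *v zz)) + zz \<bullet> (I *v zz)"
        using sy by (simp add: matrix_vector_mult_diff_distrib inner_diff_left inner_diff_right)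
      hence "(1/2) * (zz \<bullet> (I *v zz)) - (1/2) * ((xv T a \<omega> - zz) \<bullet> (I *v (xv T a \<omega> - zz)))
           = uv T a \<omega> \<bullet> xv T a \<omega> - 1/2 * (xv T a \<omega> \<bullet> (I *v xv T a \<omega>))"
        using Iz by (simp add: inner_commute algebra_simps)
      thus ?thesis using P1[of T a \<omega>] unfolding DD_def zz_def I_def xv_def by simp
    qed
    have Fe1: "(\<lambda>T. outer_prob M {\<omega>\<in>space M. \<exists>a\<in>A. e < \<bar>e1 T a \<omega>\<bar>}) \<longlonglongrightarrow> 0" if "0 < e" for e
      using est_max that unfolding unif_op1_def e1_def by simp
    have Fu: "\<exists>K. eventually (\<lambda>T. outer_prob M {\<omega>\<in>space M. \<exists>a\<in>A. K < norm (uv T a \<omega>)} < e) sequentially"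
      if "0 < e" for e
    proof -
      have Xc: "continuous_on A (\<lambda>a. (1 / sqrt (real T)) *\<^sub>R ST T a \<omega>)" if "\<omega> \<in> space M" for T \<omega>
        using ST_cont that by (intro continuous_intros) auto
      have "\<exists>K. eventually (\<lambda>T. outer_prob M {\<omega>\<in>space M. \<exists>a\<in>A.
               K < norm ((\<lambda>T \<omega> a. (1 / sqrt (real T)) *\<^sub>R ST T a \<omega>) T \<omega> a)} < e) sequentially"
        by (rule tight[OF M N A Ane Xc _ S_cont weak that]) (use S_meas in auto)
      thus ?thesis unfolding uv_def by simp
    qed
    have Fr: "(\<lambda>T. outer_prob M {\<omega>\<in>space M. \<exists>a\<in>A. e < \<bar>rr T a \<omega>\<bar>}) \<longlonglongrightarrow> 0" if e: "0 < e" for e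
    proof -
      define dev where "dev T a \<omega> = norm ((bh T a \<omega>, pih T a \<omega>, vph T a \<omega>) - (bs, phs, 0))" for T a \<omega>
      define PP where "PP T \<eta> = outer_prob M {\<omega>\<in>space M. \<exists>a\<in>A. \<eta> < \<bar>dev T a \<omega>\<bar>}" for T \<eta>
      have PPl: "(\<lambda>T. PP T \<eta>) \<longlonglongrightarrow> 0" if "0 < \<eta>" for \<eta>
        using est_cons_pi that unfolding unif_op1_def PP_def dev_def by simp
      have PPn: "0 \<le> PP T \<eta>" for T \<eta> unfolding PP_def by (rule op_nonneg) auto
      obtain \<gamma> where \<gamma>: "\<forall>T. 0 < \<gamma> T" "\<gamma> \<longlonglongrightarrow> 0" "(\<lambda>T. PP T (\<gamma> T)) \<longlonglongrightarrow> 0"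
        using gamma_exists[of PP, OF PPl PPn] by blast
      define IT where "IT T = {(a, b, pv). a \<in> A \<and> b \<in> B \<and> pv \<in> Pia a \<and> norm ((b, pv) - (bs, phs, 0)) \<le> \<gamma> T}" for T
      define FF where "FF T x \<omega> = (case x of (a, b, pv) \<Rightarrow>
             R T a b (fst pv) (snd pv) \<omega> / (1 + norm (sqrt (real T) *\<^sub>R theta a b (fst pv) (snd pv)))\<^sup>2)" for T x \<omega>
      have Rs: "unif_op1 M IT FF" unfolding IT_def FF_def using R_small \<gamma>(1,2) by blast
      hence G: "(\<lambda>T. outer_prob M {\<omega>\<in>space M. \<exists>i\<in>IT T. e < \<bar>FF T i \<omega>\<bar>}) \<longlonglongrightarrow> 0"
        unfolding unif_op1_def using e by blast
      show ?thesis
      proof (rule op_tendsto0[OF _ _ _ \<gamma>(3)[unfolded PP_def] G])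
        fix T
        show "{\<omega>\<in>space M. \<exists>a\<in>A. e < \<bar>rr T a \<omega>\<bar>} \<subseteq>
            {\<omega>\<in>space M. \<exists>a\<in>A. \<gamma> T < \<bar>dev T a \<omega>\<bar>} \<union> {\<omega>\<in>space M. \<exists>i\<in>IT T. e < \<bar>FF T i \<omega>\<bar>}"
        proof
          fix \<omega> assume "\<omega> \<in> {\<omega>\<in>space M. \<exists>a\<in>A. e < \<bar>rr T a \<omega>\<bar>}"
          then obtain a where w: "\<omega> \<in> space M" and a: "a \<in> A" and ea: "e < \<bar>rr T a \<omega>\<bar>" by auto
          show "\<omega> \<in> {\<omega>\<in>space M. \<exists>a\<in>A. \<gamma> T < \<bar>dev T a \<omega>\<bar>} \<union> {\<omega>\<in>space M. \<exists>i\<in>IT T. e < \<bar>FF T i \<omega>\<bar>}"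
          proof (cases "\<gamma> T < \<bar>dev T a \<omega>\<bar>")
            case True thus ?thesis using w a by auto
          next
            case False
            define pm where "pm = pmap a (ph T a \<omega>, vh T a \<omega>)"
            have est: "bh T a \<omega> \<in> B" "ph T a \<omega> \<in> Phi" "vh T a \<omega> \<in> Phi" using est_in w a by auto
            have pmP: "pm \<in> Pia a" unfolding pm_def defs using est by auto
            have pp: "(pih T a \<omega>, vph T a \<omega>) = pm" unfolding pm_def defs by simp
            have dv: "norm ((bh T a \<omega>, pm) - (bs, phs, 0)) \<le> \<gamma> T"
              using False unfolding dev_def pp[symmetric] by simp
            have inI: "(a, bh T a \<omega>, pm) \<in> IT T" unfolding IT_def using a est pmP dv by simp
            have "FF T (a, bh T a \<omega>, pm) \<omega> = rr T a \<omega>"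
              unfolding FF_def rr_def Rh_def xv_def pm_def defs by simp
            thus ?thesis using inI w ea by force
          qed
        qed
      qed auto
    qed
    have evlt: "eventually (\<lambda>T. outer_prob M (E T) < d) sequentially"
      if "(\<lambda>T. outer_prob M (E T)) \<longlonglongrightarrow> 0" "0 < d" for E d
      using order_tendstoD(2)[OF that] .
    have Xb: "\<exists>K\<ge>0. eventually (\<lambda>T. outer_prob M {\<omega>\<in>space M. \<exists>a\<in>A. K < norm (xv T a \<omega>)} < e) sequentially"
      if e: "0 < e" for e
    proof -
      obtain Ku where Ku: "eventually (\<lambda>T. outer_prob M {\<omega>\<in>space M. \<exists>a\<in>A. Ku < norm (uv T a \<omega>)} < e/3) sequentially"
        using Fu[of "e/3"] e by auto
      define Ku0 where "Ku0 = max Ku 0"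
      define K' where "K' = 1 + (4*Ku0+4+c)/c"
      have K'0: "0 \<le> K'" unfolding K'_def Ku0_def using c(1) by (simp add: add_nonneg_nonneg)
      have E1: "eventually (\<lambda>T. outer_prob M {\<omega>\<in>space M. \<exists>a\<in>A. 1 < \<bar>e1 T a \<omega>\<bar>} < e/3) sequentially"
        by (rule evlt[OF Fe1]) (use e in auto)
      have E2: "eventually (\<lambda>T. outer_prob M {\<omega>\<in>space M. \<exists>a\<in>A. c/8 < \<bar>rr T a \<omega>\<bar>} < e/3) sequentially"
        by (rule evlt[OF Fr]) (use e c(1) in auto)
      have "eventually (\<lambda>T. outer_prob M {\<omega>\<in>space M. \<exists>a\<in>A. K' < norm (xv T a \<omega>)} < e) sequentially"
        using E1 E2 Ku
      proof eventually_elim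
        case (elim T)
        define S1 where "S1 = {\<omega>\<in>space M. \<exists>a\<in>A. 1 < \<bar>e1 T a \<omega>\<bar>}"
        define S2 where "S2 = {\<omega>\<in>space M. \<exists>a\<in>A. c/8 < \<bar>rr T a \<omega>\<bar>}"
        define S3 where "S3 = {\<omega>\<in>space M. \<exists>a\<in>A. Ku < norm (uv T a \<omega>)}"
        have sub: "{\<omega>\<in>space M. \<exists>a\<in>A. K' < norm (xv T a \<omega>)} \<subseteq> S1 \<union> S2 \<union> S3"
        proof
          fix \<omega> assume "\<omega> \<in> {\<omega>\<in>space M. \<exists>a\<in>A. K' < norm (xv T a \<omega>)}"
          then obtain a where w: "\<omega> \<in> space M" and a: "a \<in> A" and big: "K' < norm (xv T a \<omega>)" by auto
          show "\<omega> \<in> S1 \<union> S2 \<union> S3"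
          proof (rule ccontr)
            assume "\<omega> \<notin> S1 \<union> S2 \<union> S3"
            hence h1: "\<bar>e1 T a \<omega>\<bar> \<le> 1" and h2: "\<bar>rr T a \<omega>\<bar> \<le> c/8" and h3: "norm (uv T a \<omega>) \<le> Ku"
              unfolding S1_def S2_def S3_def using w a by auto
            define n where "n = norm (xv T a \<omega>)"
            have n0: "0 \<le> n" unfolding n_def by simp
            have nz: "1 + norm (xv T a \<omega>) \<noteq> 0" using norm_ge_zero[of "xv T a \<omega>"] by linarith
            have Rr: "Rh T a \<omega> = rr T a \<omega> * (1+n)^2"
              unfolding rr_def n_def using nz by simp
            have D1: "-1 \<le> DD T a \<omega>" using P2[OF w a, of T] h1 by linarith
            have "uv T a \<omega> \<bullet> xv T a \<omega> \<le> norm (uv T a \<omega>) * n" unfolding n_def by (rule norm_cauchy_schwarz)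
            also have "\<dots> \<le> Ku0 * n" using h3 n0 unfolding Ku0_def by (intro mult_right_mono) auto
            finally have ux: "uv T a \<omega> \<bullet> xv T a \<omega> \<le> Ku0 * n" .
            have q: "c * n^2 \<le> xv T a \<omega> \<bullet> (Info a *v xv T a \<omega>)" unfolding n_def by (rule quad[OF a])
            have id: "Rh T a \<omega> = DD T a \<omega> - uv T a \<omega> \<bullet> xv T a \<omega> + (xv T a \<omega> \<bullet> (Info a *v xv T a \<omega>))/2"
              using P1[of T a \<omega>] by simp
            have "n \<le> K'" unfolding K'_def
              by (rule arith_bound[OF c(1) n0 Rr h2 D1 ux q id]) (simp add: Ku0_def)
            thus False using big n_def by simp
          qed
        qed
        have "outer_prob M {\<omega>\<in>space M. \<exists>a\<in>A. K' < norm (xv T a \<omega>)} \<le> outer_prob M (S1 \<union> S2 \<union> S3)"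
          by (rule op_mono[OF sub]) (auto simp: S1_def S2_def S3_def)
        also have "\<dots> \<le> outer_prob M (S1 \<union> S2) + outer_prob M S3"
          by (rule op_union) (auto simp: S1_def S2_def S3_def)
        also have "outer_prob M (S1 \<union> S2) \<le> outer_prob M S1 + outer_prob M S2"
          by (rule op_union) (auto simp: S1_def S2_def)
        finally show ?case using elim unfolding S1_def S2_def S3_def by linarith
      qed
      thus ?thesis using K'0 by blast
    qed
    have Rl: "(\<lambda>T. outer_prob M {\<omega>\<in>space M. \<exists>a\<in>A. \<epsilon> < \<bar>Rh T a \<omega>\<bar>}) \<longlonglongrightarrow> 0" if ep: "0 < \<epsilon>" for \<epsilon>
    proof (rule order_tendstoI)
      fix d :: real assume "d < 0"
      thus "eventually (\<lambda>T. d < outer_prob M {\<omega>\<in>space M. \<exists>a\<in>A. \<epsilon> < \<bar>Rh T a \<omega>\<bar>}) sequentially"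
      proof (intro always_eventually allI)
        fix T
        have "0 \<le> outer_prob M {\<omega>\<in>space M. \<exists>a\<in>A. \<epsilon> < \<bar>Rh T a \<omega>\<bar>}" by (rule op_nonneg) auto
        thus "d < outer_prob M {\<omega>\<in>space M. \<exists>a\<in>A. \<epsilon> < \<bar>Rh T a \<omega>\<bar>}" using \<open>d < 0\<close> by linarith
      qed
    next
      fix d :: real assume d: "0 < d"
      obtain K where K: "0 \<le> K" "eventually (\<lambda>T. outer_prob M {\<omega>\<in>space M. \<exists>a\<in>A. K < norm (xv T a \<omega>)} < d/2) sequentially"
        using Xb[of "d/2"] d by auto
      have E2: "eventually (\<lambda>T. outer_prob M {\<omega>\<in>space M. \<exists>a\<in>A. \<epsilon>/(1+K)^2 < \<bar>rr T a \<omega>\<bar>} < d/2) sequentially"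
        by (rule evlt[OF Fr]) (use d ep K(1) in auto)
      show "eventually (\<lambda>T. outer_prob M {\<omega>\<in>space M. \<exists>a\<in>A. \<epsilon> < \<bar>Rh T a \<omega>\<bar>} < d) sequentially"
        using K(2) E2
      proof eventually_elim
        case (elim T)
        define S1 where "S1 = {\<omega>\<in>space M. \<exists>a\<in>A. K < norm (xv T a \<omega>)}"
        define S2 where "S2 = {\<omega>\<in>space M. \<exists>a\<in>A. \<epsilon>/(1+K)^2 < \<bar>rr T a \<omega>\<bar>}"
        have sub: "{\<omega>\<in>space M. \<exists>a\<in>A. \<epsilon> < \<bar>Rh T a \<omega>\<bar>} \<subseteq> S1 \<union> S2"
        proof
          fix \<omega> assume "\<omega> \<in> {\<omega>\<in>space M. \<exists>a\<in>A. \<epsilon> < \<bar>Rh T a \<omega>\<bar>}"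
          then obtain a where w: "\<omega> \<in> space M" and a: "a \<in> A" and big: "\<epsilon> < \<bar>Rh T a \<omega>\<bar>" by auto
          show "\<omega> \<in> S1 \<union> S2"
          proof (rule ccontr)
            assume "\<omega> \<notin> S1 \<union> S2"
            hence h1: "norm (xv T a \<omega>) \<le> K" and h2: "\<bar>rr T a \<omega>\<bar> \<le> \<epsilon>/(1+K)^2"
              unfolding S1_def S2_def using w a by auto
            define n where "n = norm (xv T a \<omega>)"
            have n0: "0 \<le> n" unfolding n_def by simp
            have nz: "1 + norm (xv T a \<omega>) \<noteq> 0" using norm_ge_zero[of "xv T a \<omega>"] by linarith
            have "\<bar>Rh T a \<omega>\<bar> = \<bar>rr T a \<omega>\<bar> * (1+n)^2"
              unfolding rr_def n_def using nz by (simp add: abs_mult)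
            also have "\<dots> \<le> \<epsilon>/(1+K)^2 * (1+K)^2"
              using h1 h2 n0 by (intro mult_mono power_mono) (auto simp: n_def)
            also have "\<dots> = \<epsilon>" using K(1) by simp
            finally show False using big by simp
          qed
        qed
        have "outer_prob M {\<omega>\<in>space M. \<exists>a\<in>A. \<epsilon> < \<bar>Rh T a \<omega>\<bar>} \<le> outer_prob M (S1 \<union> S2)"
          by (rule op_mono[OF sub]) (auto simp: S1_def S2_def)
        also have "\<dots> \<le> outer_prob M S1 + outer_prob M S2"
          by (rule op_union) (auto simp: S1_def S2_def)
        finally show ?case using elim unfolding S1_def S2_def by linarith
      qed
    qed
    have part1: "unif_Op1 M (\<lambda>_. A) (\<lambda>T a \<omega>. norm (sqrt (real T) *\<^sub>R thh T a \<omega>))"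
      unfolding unif_Op1_def
    proof (intro allI impI)
      fix e :: real assume "0 < e"
      then obtain K where "eventually (\<lambda>T. outer_prob M {\<omega>\<in>space M. \<exists>a\<in>A. K < norm (xv T a \<omega>)} < e) sequentially"
        using Xb by blast
      thus "\<exists>K. eventually (\<lambda>T. outer_prob M {\<omega>\<in>space M. \<exists>i\<in>A. K < \<bar>norm (sqrt (real T) *\<^sub>R thh T i \<omega>)\<bar>} < e) sequentially"
        unfolding xv_def by auto
    qed
    have part2: "unif_op1 M (\<lambda>_. A) (\<lambda>T a \<omega>. R T a (bh T a \<omega>) (pih T a \<omega>) (vph T a \<omega>) \<omega>)"
      unfolding unif_op1_def using Rl unfolding Rh_def by simp
    have part3: "unif_op1 M (\<lambda>_. A) (\<lambda>T a \<omega>.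
           (Lpi T a (bh T a \<omega>) (pih T a \<omega>) (vph T a \<omega>) \<omega> - Lpi T a bs phs 0 \<omega>)
           - ((1/2) * (Z T a \<omega> \<bullet> (Info a *v Z T a \<omega>))
              - (1/2) * ((sqrt (real T) *\<^sub>R thh T a \<omega> - Z T a \<omega>)
                           \<bullet> (Info a *v (sqrt (real T) *\<^sub>R thh T a \<omega> - Z T a \<omega>)))))"
      unfolding unif_op1_def
    proof (intro allI impI)
      fix \<epsilon> :: real assume ep: "0 < \<epsilon>"
      have eq: "{\<omega>\<in>space M. \<exists>i\<in>A. \<epsilon> < \<bar>(Lpi T i (bh T i \<omega>) (pih T i \<omega>) (vph T i \<omega>) \<omega> - Lpi T i bs phs 0 \<omega>)
           - ((1/2) * (Z T i \<omega> \<bullet> (Info i *v Z T i \<omega>))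
              - (1/2) * ((sqrt (real T) *\<^sub>R thh T i \<omega> - Z T i \<omega>)
                           \<bullet> (Info i *v (sqrt (real T) *\<^sub>R thh T i \<omega> - Z T i \<omega>))))\<bar>}
          = {\<omega>\<in>space M. \<exists>a\<in>A. \<epsilon> < \<bar>Rh T a \<omega>\<bar>}" for T
        using P6 by auto
      show "(\<lambda>T. outer_prob M {\<omega>\<in>space M. \<exists>i\<in>A. \<epsilon> < \<bar>(Lpi T i (bh T i \<omega>) (pih T i \<omega>) (vph T i \<omega>) \<omega> - Lpi T i bs phs 0 \<omega>)
           - ((1/2) * (Z T i \<omega> \<bullet> (Info i *v Z T i \<omega>))
              - (1/2) * ((sqrt (real T) *\<^sub>R thh T i \<omega> - Z T i \<omega>)
                           \<bullet> (Info i *v (sqrt (real T) *\<^sub>R thh T i \<omega> - Z T i \<omega>))))\<bar>}) \<longlonglongrightarrow> 0"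
        unfolding eq using Rl[OF ep] .
    qed
    show ?thesis using part1 part2 part3 by blast
  qed
qed

end
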